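(* Let $N\ge1$, $\theta\in\mathbb{R}$, frequencies $w_1,\dots,w_N>0$ and amplitudes $G_1,\dots,G_N\in\mathbb{R}$, and let $g(t)=\sum_{k=1}^N G_k\sin(w_kt+\theta)$. For $i=1,2,3,\dots$ let $$x_i(t)=\sum_{k=1}^N G_kF_i(w_k)\sin(w_kt+\phi_i+\theta)+n_i(t),$$ where the tuples $(F_i(w_1),\dots,F_i(w_N),\phi_i,n_i(\cdot))$ are i.i.d. across $i$; for each $i$, the vector $(F_i(w_1),\dots,F_i(w_N))$, the phase $\phi_i$ and the noise process $n_i(\cdot)$ are mutually independent; each $F_i(w_k)$ is integrable; $\phi_i$ is uniform on $[-\pi,\pi]$ (the phase lag of channel $i$ being the same at all frequencies $w_k$); and $E[n_i(t)]=0$ for each $t$. For $M\ge1$ let $X^+_M=\{i\le M:|\phi_i|\le\pi/2\}$ with cardinality $\overline{X^+_M}$ and $\hat g_M(t)=\frac{1}{\overline{X^+_M}}\sum_{i\in X^+_M}x_i(t)$. If $E[F_i(w_k)]$ is the same constant for all $k=1,\dots,N$, then there is a constant $c$ such that for every $t$, $\hat g_M(t)\to c\,g(t)$ almost surely as $M\to\infty$.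
   Context: $x_i$ models the noisy output of the $i$-th linear time-invariant channel (magnitude response $F_i(w_k)$ at $w_k$, phase response $\phi_i$) driven by the common periodic input $g$. *)

theory Defs
  imports "HOL-Probability.Probability"
begin

text \<open>Mutual independence of three random elements (possibly of different types),
  written out as independence of the generated event families, exactly as
  indep_vars unfolds.\<close>
definition indep3 ::
  "'a measure \<Rightarrow> 'b measure \<Rightarrow> ('a \<Rightarrow> 'b) \<Rightarrow> 'c measure \<Rightarrow> ('a \<Rightarrow> 'c)
     \<Rightarrow> 'd measure \<Rightarrow> ('a \<Rightarrow> 'd) \<Rightarrow> bool" where
  "indep3 M N1 X1 N2 X2 N3 X3 \<longleftrightarrow>
     X1 \<in> measurable M N1 \<and> X2 \<in> measurable M N2 \<and> X3 \<in> measurable M N3 \<and>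
     prob_space.indep_sets M
       (\<lambda>j::nat. if j = 0 then {X1 -` A \<inter> space M | A. A \<in> sets N1}
                 else if j = 1 then {X2 -` A \<inter> space M | A. A \<in> sets N2}
                 else {X3 -` A \<inter> space M | A. A \<in> sets N3}) {0, 1, 2}"

definition tuple_space :: "nat \<Rightarrow> ((nat \<Rightarrow> real) \<times> real \<times> (real \<Rightarrow> real)) measure" where
  "tuple_space N = (PiM {1..N} (\<lambda>_. borel)) \<Otimes>\<^sub>M (borel \<Otimes>\<^sub>M PiM UNIV (\<lambda>_. borel))"

end

theory Submission
  imports Defs
begin


lemma cesaro_real:
  fixes a :: "nat \<Rightarrow> real"
  assumes lim: "a \<longlonglongrightarrow> L"
  shows "(\<lambda>n. (\<Sum>i<n. a i) / real n) \<longlonglongrightarrow> L"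
proof (rule LIMSEQ_I)
  fix r :: real assume r: "0 < r"
  from LIMSEQ_D[OF lim, of "r/2"] r obtain N where N: "\<And>n. n \<ge> N \<Longrightarrow> norm (a n - L) < r/2"
    by auto
  define B where "B = (\<Sum>i<N. \<bar>a i - L\<bar>)"
  have B0: "B \<ge> 0" unfolding B_def by (auto intro: sum_nonneg)
  define n0 where "n0 = max (N+1) (nat \<lceil>2*B/r\<rceil> + 1)"
  show "\<exists>no. \<forall>n\<ge>no. norm ((\<Sum>i<n. a i) / real n - L) < r"
  proof (intro exI allI impI)
    fix n assume n: "n \<ge> n0"
    have nN: "n \<ge> N" "n > 0" using n unfolding n0_def by auto
    have nB: "real n > 2*B/r"
    proof -
      have "real n \<ge> real (nat \<lceil>2*B/r\<rceil> + 1)" using n unfolding n0_def by auto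
      moreover have "real (nat \<lceil>2*B/r\<rceil>) \<ge> 2*B/r" by linarith
      ultimately show ?thesis by simp
    qed
    have eq: "(\<Sum>i<n. a i) / real n - L = (\<Sum>i<n. a i - L) / real n"
      using nN by (simp add: sum_subtractf field_simps)
    have split: "{..<n} = {..<N} \<union> {N..<n}" using nN by auto
    have "\<bar>\<Sum>i<n. a i - L\<bar> \<le> (\<Sum>i<n. \<bar>a i - L\<bar>)" by (rule sum_abs)
    also have "\<dots> = B + (\<Sum>i\<in>{N..<n}. \<bar>a i - L\<bar>)"
      unfolding B_def split by (subst sum.union_disjoint) auto
    also have "(\<Sum>i\<in>{N..<n}. \<bar>a i - L\<bar>) \<le> (\<Sum>i\<in>{N..<n}. r/2)"
      using N by (intro sum_mono) (auto intro: less_imp_le)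
    also have "\<dots> = real (n - N) * (r/2)" by simp
    also have "\<dots> \<le> real n * (r/2)" using r by (intro mult_right_mono) auto
    finally have S: "\<bar>\<Sum>i<n. a i - L\<bar> \<le> B + real n * (r/2)" by simp
    have "B < real n * (r/2)" using nB r by (simp add: field_simps)
    with S have "\<bar>\<Sum>i<n. a i - L\<bar> < real n * r" by simp
    then show "norm ((\<Sum>i<n. a i) / real n - L) < r"
      unfolding eq using nN by (simp add: field_simps abs_divide)
  qed
qed


lemma sandwich_fixed:
  fixes a :: "nat \<Rightarrow> real" and k :: "nat \<Rightarrow> nat"
  assumes amono: "mono a" and apos: "\<And>n. a n \<ge> 0"
    and kmono: "mono k" and kpos: "\<And>j. k j > 0" and kunb: "\<And>n. \<exists>j. n < k j"
    and ratio: "(\<lambda>j. real (k (Suc j)) / real (k j)) \<longlonglongrightarrow> \<alpha>"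
    and lim: "(\<lambda>j. a (k j) / real (k j)) \<longlonglongrightarrow> \<mu>"
    and \<delta>: "\<delta> > 0" and \<alpha>: "\<alpha> > 0"
  shows "eventually (\<lambda>n. (\<mu>-\<delta>)/(\<alpha>+\<delta>) \<le> a n / real n \<and> a n / real n \<le> (\<mu>+\<delta>)*(\<alpha>+\<delta>)) sequentially"
proof -
  from LIMSEQ_D[OF lim \<delta>] obtain J1 where J1: "\<And>j. j \<ge> J1 \<Longrightarrow> \<bar>a (k j) / real (k j) - \<mu>\<bar> < \<delta>"
    by auto
  from LIMSEQ_D[OF ratio \<delta>] obtain J2 where J2: "\<And>j. j \<ge> J2 \<Longrightarrow> \<bar>real (k (Suc j)) / real (k j) - \<alpha>\<bar> < \<delta>"
    by auto
  define J where "J = max J1 J2"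
  show ?thesis
  proof (rule eventually_sequentiallyI[of "k J"])
    fix n assume n: "k J \<le> n"
    have npos: "n > 0" using kpos[of J] n by linarith
    define L where "L = (LEAST j. n < k j)"
    have L1: "n < k L" unfolding L_def using kunb[of n] by (metis LeastI)
    have L0: "L \<noteq> 0"
    proof
      assume "L = 0"
      then have "n < k 0" using L1 by simp
      moreover have "k 0 \<le> k J" using kmono by (simp add: monoD)
      ultimately show False using n by simp
    qed
    define j where "j = L - 1"
    have jL: "Suc j = L" using L0 unfolding j_def by simp
    have kj: "k j \<le> n"
    proof -
      have "j < L" using jL by simp
      then have "\<not> n < k j" unfolding L_def by (rule not_less_Least)
      then show ?thesis by simp
    qed
    have kSj: "n < k (Suc j)" using L1 jL by simp
    have jJ: "j \<ge> J"
    proof (rule ccontr)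
      assume "\<not> j \<ge> J"
      then have "Suc j \<le> J" by simp
      then have "k (Suc j) \<le> k J" using kmono by (simp add: monoD)
      then show False using kSj n by simp
    qed
    have e1: "\<bar>a (k (Suc j)) / real (k (Suc j)) - \<mu>\<bar> < \<delta>" using J1 jJ unfolding J_def by simp
    have e1': "\<bar>a (k j) / real (k j) - \<mu>\<bar> < \<delta>" using J1 jJ unfolding J_def by simp
    have e2: "\<bar>real (k (Suc j)) / real (k j) - \<alpha>\<bar> < \<delta>" using J2 jJ unfolding J_def by simp
    have kjp: "real (k j) > 0" "real (k (Suc j)) > 0" using kpos by auto
    have up1: "a (k (Suc j)) \<le> (\<mu>+\<delta>) * real (k (Suc j))"
      using e1 kjp by (simp add: abs_less_iff field_simps)
    have rat: "real (k (Suc j)) \<le> (\<alpha>+\<delta>) * real (k j)"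
      using e2 kjp by (simp add: abs_less_iff field_simps)
    have lo1: "(\<mu>-\<delta>) * real (k j) \<le> a (k j)"
      using e1' kjp by (simp add: abs_less_iff field_simps)
    have an1: "a n \<le> a (k (Suc j))" using amono kSj by (simp add: monoD)
    have an2: "a (k j) \<le> a n" using amono kj by (simp add: monoD)
    have md: "\<mu> + \<delta> \<ge> 0"
    proof -
      have "0 \<le> (\<mu>+\<delta>) * real (k (Suc j))" using apos[of "k (Suc j)"] up1 by (rule order_trans)
      then show ?thesis using kjp by (simp add: zero_le_mult_iff)
    qed
    have "a n \<le> (\<mu>+\<delta>) * ((\<alpha>+\<delta>) * real (k j))"
      using an1 up1 mult_left_mono[OF rat md] by linarith
    also have "\<dots> \<le> (\<mu>+\<delta>) * ((\<alpha>+\<delta>) * real n)"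
      using md \<alpha> \<delta> kj by (intro mult_left_mono) auto
    finally have U: "a n / real n \<le> (\<mu>+\<delta>)*(\<alpha>+\<delta>)"
      using npos by (simp add: field_simps)
    have Lo: "(\<mu>-\<delta>)/(\<alpha>+\<delta>) \<le> a n / real n"
    proof (cases "\<mu> - \<delta> \<le> 0")
      case True
      then have "(\<mu>-\<delta>)/(\<alpha>+\<delta>) \<le> 0" using \<alpha> \<delta> by (simp add: divide_nonpos_pos)
      also have "0 \<le> a n / real n" using apos[of n] by simp
      finally show ?thesis .
    next
      case False
      have "(\<mu>-\<delta>) * real n \<le> (\<mu>-\<delta>) * real (k (Suc j))"
        using False kSj by (intro mult_left_mono) auto
      also have "\<dots> \<le> (\<mu>-\<delta>) * ((\<alpha>+\<delta>) * real (k j))"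
        using False rat by (intro mult_left_mono) auto
      also have "\<dots> = (\<alpha>+\<delta>) * ((\<mu>-\<delta>) * real (k j))" by simp
      also have "\<dots> \<le> (\<alpha>+\<delta>) * a n"
        using lo1 an2 \<alpha> \<delta> by (intro mult_left_mono) auto
      finally have "(\<mu>-\<delta>) * real n \<le> (\<alpha>+\<delta>) * a n" .
      then show ?thesis using npos \<alpha> \<delta> by (simp add: field_simps)
    qed
    show "(\<mu>-\<delta>)/(\<alpha>+\<delta>) \<le> a n / real n \<and> a n / real n \<le> (\<mu>+\<delta>)*(\<alpha>+\<delta>)"
      using U Lo by simp
  qed
qed


lemma limit_from_bounds:
  fixes f :: "nat \<Rightarrow> real"
  assumes ev: "\<And>l. eventually (\<lambda>n. lo l \<le> f n \<and> f n \<le> up l) sequentially"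
    and lo: "lo \<longlonglongrightarrow> \<mu>" and up: "up \<longlonglongrightarrow> \<mu>"
  shows "f \<longlonglongrightarrow> \<mu>"
proof (rule LIMSEQ_I)
  fix r :: real assume r: "r > 0"
  from LIMSEQ_D[OF lo r] obtain l1 where l1: "\<And>l. l \<ge> l1 \<Longrightarrow> norm (lo l - \<mu>) < r" by auto
  from LIMSEQ_D[OF up r] obtain l2 where l2: "\<And>l. l \<ge> l2 \<Longrightarrow> norm (up l - \<mu>) < r" by auto
  define l where "l = max l1 l2"
  have a: "\<bar>lo l - \<mu>\<bar> < r" "\<bar>up l - \<mu>\<bar> < r" using l1 l2 unfolding l_def by auto
  from ev[of l] obtain N where N: "\<And>n. n \<ge> N \<Longrightarrow> lo l \<le> f n \<and> f n \<le> up l"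
    unfolding eventually_sequentially by auto
  show "\<exists>no. \<forall>n\<ge>no. norm (f n - \<mu>) < r"
  proof (intro exI allI impI)
    fix n assume "n \<ge> N"
    from N[OF this] a show "norm (f n - \<mu>) < r" by auto
  qed
qed

definition kseq :: "real \<Rightarrow> nat \<Rightarrow> nat" where
  "kseq \<alpha> j = nat \<lfloor>\<alpha> ^ j\<rfloor>"

lemma kseq_bounds:
  assumes "\<alpha> > 1"
  shows "real (kseq \<alpha> j) \<le> \<alpha> ^ j" "\<alpha> ^ j - 1 < real (kseq \<alpha> j)" "kseq \<alpha> j > 0"
    "\<alpha> ^ j / 2 \<le> real (kseq \<alpha> j)"
proof -
  have p: "\<alpha> ^ j \<ge> 1" using assms by (simp add: one_le_power)
  then have f: "\<lfloor>\<alpha> ^ j\<rfloor> \<ge> 1" by simp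
  show "real (kseq \<alpha> j) \<le> \<alpha> ^ j" unfolding kseq_def using f by linarith
  show "\<alpha> ^ j - 1 < real (kseq \<alpha> j)" unfolding kseq_def using f by linarith
  show "kseq \<alpha> j > 0" unfolding kseq_def using f by linarith
  show "\<alpha> ^ j / 2 \<le> real (kseq \<alpha> j)" unfolding kseq_def using f p by linarith
qed

lemma kseq_mono:
  assumes "\<alpha> > 1" shows "mono (kseq \<alpha>)"
proof (rule monoI)
  fix i j :: nat assume "i \<le> j"
  then have "\<alpha> ^ i \<le> \<alpha> ^ j" using assms by (intro power_increasing) auto
  then show "kseq \<alpha> i \<le> kseq \<alpha> j" unfolding kseq_def by (intro nat_mono floor_mono)
qed

lemma kseq_unb:
  assumes "\<alpha> > 1" shows "\<exists>j. n < kseq \<alpha> j"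
proof -
  obtain j where j: "real n + 1 < \<alpha> ^ j" using real_arch_pow[OF assms] by blast
  then have "real n < real (kseq \<alpha> j)" using kseq_bounds(2)[OF assms, of j] by linarith
  then show ?thesis by auto
qed

lemma kseq_ratio:
  assumes a: "\<alpha> > 1"
  shows "(\<lambda>j. real (kseq \<alpha> (Suc j)) / real (kseq \<alpha> j)) \<longlonglongrightarrow> \<alpha>"
proof (rule tendsto_sandwich)
  have q: "(\<lambda>j. (1/\<alpha>) ^ j) \<longlonglongrightarrow> 0"
    using a by (intro LIMSEQ_power_zero) auto
  have "(\<lambda>j. \<alpha> - (1/\<alpha>) ^ j) \<longlonglongrightarrow> \<alpha> - 0" by (intro tendsto_intros q)
  then show "(\<lambda>j. \<alpha> - (1/\<alpha>) ^ j) \<longlonglongrightarrow> \<alpha>" by simp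
  have "(\<lambda>j. \<alpha> / (1 - (1/\<alpha>) ^ j)) \<longlonglongrightarrow> \<alpha> / (1 - 0)" by (intro tendsto_intros q) auto
  then show "(\<lambda>j. \<alpha> / (1 - (1/\<alpha>) ^ j)) \<longlonglongrightarrow> \<alpha>" by simp
  show "eventually (\<lambda>j. \<alpha> - (1/\<alpha>) ^ j \<le> real (kseq \<alpha> (Suc j)) / real (kseq \<alpha> j)) sequentially"
  proof (intro always_eventually allI)
    fix j
    have b1: "real (kseq \<alpha> j) \<le> \<alpha> ^ j" "\<alpha> ^ Suc j - 1 < real (kseq \<alpha> (Suc j))"
      "real (kseq \<alpha> j) > 0" using kseq_bounds[OF a, of j] kseq_bounds[OF a, of "Suc j"] by auto
    have pj: "\<alpha> ^ j > 0" using a by simp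
    have "\<alpha> - (1/\<alpha>) ^ j = (\<alpha> ^ Suc j - 1) / \<alpha> ^ j"
      using pj by (simp add: power_one_over diff_divide_distrib)
    also have "\<dots> \<le> (\<alpha> ^ Suc j - 1) / real (kseq \<alpha> j)"
    proof (rule divide_left_mono)
      have "1 \<le> \<alpha> ^ Suc j" using a by (intro one_le_power) auto
      then show "0 \<le> \<alpha> ^ Suc j - 1" by simp
    qed (use b1 in auto)
    also have "\<dots> \<le> real (kseq \<alpha> (Suc j)) / real (kseq \<alpha> j)"
      using b1 by (intro divide_right_mono) auto
    finally show "\<alpha> - (1/\<alpha>) ^ j \<le> real (kseq \<alpha> (Suc j)) / real (kseq \<alpha> j)" .
  qed
  show "eventually (\<lambda>j. real (kseq \<alpha> (Suc j)) / real (kseq \<alpha> j) \<le> \<alpha> / (1 - (1/\<alpha>) ^ j)) sequentially"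
  proof (rule eventually_sequentiallyI[of 1])
    fix j :: nat assume j: "1 \<le> j"
    have b1: "real (kseq \<alpha> (Suc j)) \<le> \<alpha> ^ Suc j" "\<alpha> ^ j - 1 < real (kseq \<alpha> j)"
      using kseq_bounds[OF a, of j] kseq_bounds[OF a, of "Suc j"] by auto
    have pj: "\<alpha> ^ j > 1" using a j by (simp add: one_less_power)
    have "real (kseq \<alpha> (Suc j)) / real (kseq \<alpha> j) \<le> \<alpha> ^ Suc j / real (kseq \<alpha> j)"
      using b1 kseq_bounds(3)[OF a, of j] by (intro divide_right_mono) auto
    also have "\<dots> \<le> \<alpha> ^ Suc j / (\<alpha> ^ j - 1)"
      using b1 pj a by (intro divide_left_mono) auto
    also have "\<dots> = \<alpha> / (1 - (1/\<alpha>) ^ j)"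
    proof -
      have "\<alpha> ^ j \<noteq> 0" "\<alpha> \<noteq> 0" using pj a by auto
      then show ?thesis by (simp add: power_one_over field_simps)
    qed
    finally show "real (kseq \<alpha> (Suc j)) / real (kseq \<alpha> j) \<le> \<alpha> / (1 - (1/\<alpha>) ^ j)" .
  qed
qed



lemma geom_tail:
  fixes \<alpha> x :: real
  assumes a: "\<alpha> > 1" and x: "x \<ge> 0"
  shows "(\<Sum>j<K. if x \<le> real (kseq \<alpha> j) then x^2 / real (kseq \<alpha> j) else 0) \<le> (2*\<alpha>/(\<alpha>-1)) * x"
proof -
  define y where "y = max x 1"
  define q where "q = 1/\<alpha>"
  have q: "0 < q" "q < 1" using a unfolding q_def by auto
  obtain j1 where "y < \<alpha> ^ j1" using real_arch_pow[OF a] by blast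
  then have ex: "\<exists>j. y \<le> \<alpha> ^ j" by (auto intro: less_imp_le)
  define j0 where "j0 = (LEAST j. y \<le> \<alpha> ^ j)"
  have yj0: "y \<le> \<alpha> ^ j0" unfolding j0_def using ex by (rule LeastI_ex)
  define h where "h j = (if j0 \<le> j then 2 * x^2 * q ^ j else 0)" for j
  have term_le: "(if x \<le> real (kseq \<alpha> j) then x^2 / real (kseq \<alpha> j) else 0) \<le> h j" for j
  proof (cases "x \<le> real (kseq \<alpha> j)")
    case True
    have kb: "real (kseq \<alpha> j) \<le> \<alpha> ^ j" "\<alpha> ^ j / 2 \<le> real (kseq \<alpha> j)" "kseq \<alpha> j > 0"
      using kseq_bounds[OF a] by auto
    have "1 \<le> \<alpha> ^ j" using a by (intro one_le_power) auto
    then have "y \<le> \<alpha> ^ j" using True kb unfolding y_def by auto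
    then have "j0 \<le> j" unfolding j0_def by (rule Least_le)
    have "x^2 / real (kseq \<alpha> j) \<le> x^2 / (\<alpha> ^ j / 2)"
      using kb a by (intro divide_left_mono) auto
    also have "\<dots> = 2 * x^2 * q ^ j" unfolding q_def by (simp add: power_one_over)
    finally show ?thesis using True \<open>j0 \<le> j\<close> unfolding h_def by simp
  next
    case False
    then show ?thesis unfolding h_def using q by auto
  qed
  have hnn: "h j \<ge> 0" for j unfolding h_def using q by auto
  have sq: "summable (\<lambda>j. 2 * x^2 * q ^ j)" using q by (intro summable_mult summable_geometric) auto
  have sh: "summable h"
    by (rule summable_comparison_test'[OF sq, of 0]) (use q in \<open>auto simp: h_def hnn\<close>)
  have "(\<Sum>j<K. if x \<le> real (kseq \<alpha> j) then x^2 / real (kseq \<alpha> j) else 0) \<le> (\<Sum>j<K. h j)"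
    by (intro sum_mono term_le)
  also have "\<dots> \<le> suminf h" using sh hnn by (intro sum_le_suminf) auto
  also have "suminf h = (\<Sum>n. h (n + j0)) + (\<Sum>i<j0. h i)"
    using sh by (rule suminf_split_initial_segment)
  also have "(\<Sum>i<j0. h i) = 0" unfolding h_def by simp
  also have "(\<lambda>n. h (n + j0)) = (\<lambda>n. (2 * x^2 * q ^ j0) * q ^ n)"
    unfolding h_def by (simp add: power_add mult_ac)
  also have "(\<Sum>n. (2 * x^2 * q ^ j0) * q ^ n) = (2 * x^2 * q ^ j0) * (1 / (1 - q))"
    using q by (subst suminf_mult) (auto simp: suminf_geometric)
  also have "\<dots> \<le> (2*\<alpha>/(\<alpha>-1)) * x"
  proof -
    have qj0: "q ^ j0 \<le> 1 / y"
    proof -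
      have "q ^ j0 = 1 / \<alpha> ^ j0" unfolding q_def by (simp add: power_one_over)
      also have "\<dots> \<le> 1 / y" using yj0 unfolding y_def by (intro divide_left_mono) auto
      finally show ?thesis .
    qed
    have y1: "y \<ge> x" "y \<ge> 1" unfolding y_def by auto
    have "x^2 / y \<le> x"
      using y1 x by (simp add: field_simps power2_eq_square mult_left_mono)
    have "2 * x^2 * q ^ j0 * (1 / (1 - q)) \<le> 2 * x^2 * (1/y) * (1 / (1 - q))"
      using qj0 q by (intro mult_right_mono mult_left_mono) auto
    also have "\<dots> = 2 * (x^2 / y) * (\<alpha>/(\<alpha>-1))"
      using a unfolding q_def by (simp add: field_simps)
    also have "\<dots> \<le> 2 * x * (\<alpha>/(\<alpha>-1))"
      using \<open>x^2 / y \<le> x\<close> a by (intro mult_right_mono mult_left_mono) auto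
    also have "\<dots> = (2*\<alpha>/(\<alpha>-1)) * x" by simp
    finally show ?thesis .
  qed
  finally show ?thesis by simp
qed

lemma count_bound:
  fixes x :: real assumes x: "x \<ge> 0"
  shows "(\<Sum>i<n. if real (Suc i) < x then 1 else 0) \<le> x"
proof -
  have "(\<Sum>i<n. if real (Suc i) < x then 1 else (0::real)) = (\<Sum>i\<in>{i\<in>{..<n}. real (Suc i) < x}. 1)"
    by (subst sum.inter_filter) auto
  also have "\<dots> = real (card {i\<in>{..<n}. real (Suc i) < x})" by simp
  also have "card {i\<in>{..<n}. real (Suc i) < x} \<le> card {..<nat \<lfloor>x\<rfloor>}"
  proof (rule card_mono)
    show "{i \<in> {..<n}. real (Suc i) < x} \<subseteq> {..<nat \<lfloor>x\<rfloor>}"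
    proof
      fix i assume "i \<in> {i \<in> {..<n}. real (Suc i) < x}"
      then have "real i + 1 < x" by simp
      then have "int i + 1 \<le> \<lfloor>x\<rfloor>" by linarith
      then show "i \<in> {..<nat \<lfloor>x\<rfloor>}" by simp
    qed
  qed auto
  then have "real (card {i\<in>{..<n}. real (Suc i) < x}) \<le> real (nat \<lfloor>x\<rfloor>)" by simp
  also have "\<dots> \<le> x" using x by linarith
  finally show ?thesis .
qed

definition tr :: "nat \<Rightarrow> real \<Rightarrow> real" where
  "tr i x = (if x \<le> real (Suc i) then x else 0)"

lemma tr_sq_sum:
  "(\<Sum>i<k. (tr i x)^2) \<le> (if x \<le> real k then real k * x^2 else 0)"
proof -
  have "(\<Sum>i<k. (tr i x)^2) \<le> (\<Sum>i<k. if x \<le> real k then x^2 else 0)"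
  proof (rule sum_mono)
    fix i assume "i \<in> {..<k}"
    then have "real (Suc i) \<le> real k" by simp
    then show "(tr i x)^2 \<le> (if x \<le> real k then x^2 else 0)"
      unfolding tr_def by auto
  qed
  also have "\<dots> = (if x \<le> real k then real k * x^2 else 0)" by simp
  finally show ?thesis .
qed

lemma var_sum_bound:
  fixes \<alpha> x :: real
  assumes a: "\<alpha> > 1" and x: "x \<ge> 0"
  shows "(\<Sum>j<K. (\<Sum>i<kseq \<alpha> j. (tr i x)^2) / (real (kseq \<alpha> j))^2) \<le> (2*\<alpha>/(\<alpha>-1)) * x"
proof -
  have "(\<Sum>j<K. (\<Sum>i<kseq \<alpha> j. (tr i x)^2) / (real (kseq \<alpha> j))^2)
      \<le> (\<Sum>j<K. if x \<le> real (kseq \<alpha> j) then x^2 / real (kseq \<alpha> j) else 0)"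
  proof (rule sum_mono)
    fix j
    have kp: "real (kseq \<alpha> j) > 0" using kseq_bounds(3)[OF a] by simp
    have "(\<Sum>i<kseq \<alpha> j. (tr i x)^2) / (real (kseq \<alpha> j))^2
       \<le> (if x \<le> real (kseq \<alpha> j) then real (kseq \<alpha> j) * x^2 else 0) / (real (kseq \<alpha> j))^2"
      by (intro divide_right_mono tr_sq_sum) auto
    also have "\<dots> = (if x \<le> real (kseq \<alpha> j) then x^2 / real (kseq \<alpha> j) else 0)"
      using kp by (simp add: power2_eq_square)
    finally show "(\<Sum>i<kseq \<alpha> j. (tr i x)^2) / (real (kseq \<alpha> j))^2
       \<le> (if x \<le> real (kseq \<alpha> j) then x^2 / real (kseq \<alpha> j) else 0)" .
  qed
  also have "\<dots> \<le> (2*\<alpha>/(\<alpha>-1)) * x" by (rule geom_tail[OF a x])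
  finally show ?thesis .
qed



lemma tr_measurable[measurable]: "tr i \<in> borel_measurable borel"
  unfolding tr_def by measurable

lemma tr_abs: "\<bar>tr i x\<bar> \<le> \<bar>x\<bar>" "x \<ge> 0 \<Longrightarrow> tr i x \<ge> 0" "x \<ge> 0 \<Longrightarrow> tr i x \<le> real (Suc i)"
  unfolding tr_def by auto

locale slln = prob_space +
  fixes X :: "nat \<Rightarrow> 'a \<Rightarrow> real"
  assumes rv[measurable]: "\<And>i. X i \<in> borel_measurable M"
    and nn: "\<And>i \<omega>. 0 \<le> X i \<omega>"
    and ident: "\<And>i. distr M borel (X i) = distr M borel (X 0)"
    and indep: "\<And>i j. i \<noteq> j \<Longrightarrow> indep_var borel (X i) borel (X j)"
    and int0: "integrable M (X 0)"
begin

lemma transfer_integral: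
  fixes h :: "real \<Rightarrow> real"
  assumes [measurable]: "h \<in> borel_measurable borel"
  shows "(\<integral>\<omega>. h (X i \<omega>) \<partial>M) = (\<integral>\<omega>. h (X 0 \<omega>) \<partial>M)"
proof -
  have "(\<integral>\<omega>. h (X i \<omega>) \<partial>M) = integral\<^sup>L (distr M borel (X i)) h"
    by (rule Bochner_Integration.integral_distr[OF rv assms, symmetric])
  also have "\<dots> = integral\<^sup>L (distr M borel (X 0)) h" by (simp only: ident[of i])
  also have "\<dots> = (\<integral>\<omega>. h (X 0 \<omega>) \<partial>M)" by (rule Bochner_Integration.integral_distr[OF rv assms])
  finally show ?thesis .
qed

lemma transfer_integrable:
  fixes h :: "real \<Rightarrow> real"
  assumes [measurable]: "h \<in> borel_measurable borel"
  shows "integrable M (\<lambda>\<omega>. h (X i \<omega>)) \<longleftrightarrow> integrable M (\<lambda>\<omega>. h (X 0 \<omega>))"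
proof -
  have "integrable M (\<lambda>\<omega>. h (X i \<omega>)) \<longleftrightarrow> integrable (distr M borel (X i)) h"
    by (rule Bochner_Integration.integrable_distr_eq[OF rv assms, symmetric])
  also have "\<dots> \<longleftrightarrow> integrable (distr M borel (X 0)) h" by (simp only: ident[of i])
  also have "\<dots> \<longleftrightarrow> integrable M (\<lambda>\<omega>. h (X 0 \<omega>))" by (rule Bochner_Integration.integrable_distr_eq[OF rv assms])
  finally show ?thesis .
qed

lemma transfer_prob:
  assumes [measurable]: "A \<in> sets borel"
  shows "prob {\<omega>\<in>space M. X i \<omega> \<in> A} = prob {\<omega>\<in>space M. X 0 \<omega> \<in> A}"
proof -
  have "prob {\<omega>\<in>space M. X i \<omega> \<in> A} = measure (distr M borel (X i)) A"
    by (subst measure_distr) (auto intro!: arg_cong[where f=prob])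
  also have "\<dots> = measure (distr M borel (X 0)) A" by (simp only: ident[of i])
  also have "\<dots> = prob {\<omega>\<in>space M. X 0 \<omega> \<in> A}"
    by (subst measure_distr) (auto intro!: arg_cong[where f=prob])
  finally show ?thesis .
qed

definition "\<mu> = expectation (X 0)"
definition "Y i \<omega> = tr i (X i \<omega>)"
definition "m i = expectation (Y i)"
definition "v i = expectation (\<lambda>\<omega>. (tr i (X 0 \<omega>))^2)"

lemma Y_measurable[measurable]: "Y i \<in> borel_measurable M"
  unfolding Y_def by measurable

lemma Y_bounds: "0 \<le> Y i \<omega>" "Y i \<omega> \<le> real (Suc i)"
  unfolding Y_def using tr_abs nn by auto

lemma Y_integrable: "integrable M (Y i)"
proof (rule integrable_const_bound[where B="real (Suc i)"])
  show "AE x in M. norm (Y i x) \<le> real (Suc i)"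
    using Y_bounds[of i] by (auto simp: abs_of_nonneg simp del: of_nat_Suc)
qed auto

lemma m_eq: "m i = (\<integral>\<omega>. tr i (X 0 \<omega>) \<partial>M)"
  unfolding m_def Y_def by (rule transfer_integral) measurable

lemma stepA: "AE \<omega> in M. eventually (\<lambda>n. X n \<omega> = Y n \<omega>) sequentially"
proof -
  define A where "A n = {\<omega>\<in>space M. real (Suc n) < X n \<omega>}" for n
  have [measurable]: "A n \<in> sets M" for n unfolding A_def by measurable
  have pA: "prob (A n) = prob {\<omega>\<in>space M. X 0 \<omega> \<in> {real (Suc n)<..}}" for n
    unfolding A_def using transfer_prob[of "{real (Suc n)<..}" n] by simp
  have sumA: "(\<Sum>n<K. prob (A n)) \<le> \<mu>" for K
  proof -
    have "(\<Sum>n<K. prob (A n)) = (\<Sum>n<K. \<integral>\<omega>. indicator {\<omega>\<in>space M. X 0 \<omega> \<in> {real (Suc n)<..}} \<omega> \<partial>M)"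
      by (simp add: pA)
    also have "\<dots> = (\<integral>\<omega>. (\<Sum>n<K. indicator {\<omega>\<in>space M. X 0 \<omega> \<in> {real (Suc n)<..}} \<omega>) \<partial>M)"
      by (rule Bochner_Integration.integral_sum[symmetric]) (intro integrable_real_indicator; measurable?; simp add: less_top[symmetric])
    also have "\<dots> \<le> (\<integral>\<omega>. X 0 \<omega> \<partial>M)"
    proof (rule integral_mono)
      show "integrable M (\<lambda>\<omega>. \<Sum>n<K. indicator {\<omega>\<in>space M. X 0 \<omega> \<in> {real (Suc n)<..}} \<omega> :: real)"
        by (intro Bochner_Integration.integrable_sum integrable_real_indicator; measurable?; simp add: less_top[symmetric])
      show "integrable M (X 0)" by (rule int0)
      fix \<omega> assume "\<omega> \<in> space M"
      then have "(\<Sum>n<K. indicator {\<omega>\<in>space M. X 0 \<omega> \<in> {real (Suc n)<..}} \<omega> :: real)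
          = (\<Sum>n<K. if real (Suc n) < X 0 \<omega> then 1 else 0)"
        by (intro sum.cong) (auto simp: indicator_def)
      also have "\<dots> \<le> X 0 \<omega>" by (rule count_bound[OF nn])
      finally show "(\<Sum>n<K. indicator {\<omega>\<in>space M. X 0 \<omega> \<in> {real (Suc n)<..}} \<omega> :: real) \<le> X 0 \<omega>" .
    qed
    finally show ?thesis unfolding \<mu>_def .
  qed
  have "summable (\<lambda>n. prob (A n))"
    by (rule summableI_nonneg_bounded[OF _ sumA]) auto
  then have "AE \<omega> in M. eventually (\<lambda>n. \<omega> \<in> space M - A n) sequentially"
    by (intro borel_cantelli_AE1) (auto simp: less_top[symmetric])
  then show ?thesis
  proof (rule AE_mp, intro AE_I2 impI)
    fix \<omega> assume "\<omega> \<in> space M" and ev: "eventually (\<lambda>n. \<omega> \<in> space M - A n) sequentially"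
    show "eventually (\<lambda>n. X n \<omega> = Y n \<omega>) sequentially"
      using ev by eventually_elim (auto simp: A_def Y_def tr_def \<open>\<omega> \<in> space M\<close>)
  qed
qed

lemma stepB: "m \<longlonglongrightarrow> \<mu>"
proof -
  have "(\<lambda>i. \<integral>\<omega>. tr i (X 0 \<omega>) \<partial>M) \<longlonglongrightarrow> (\<integral>\<omega>. X 0 \<omega> \<partial>M)"
  proof (rule integral_dominated_convergence[where w="X 0"])
    show "integrable M (X 0)" by (rule int0)
    show "AE \<omega> in M. (\<lambda>i. tr i (X 0 \<omega>)) \<longlonglongrightarrow> X 0 \<omega>"
    proof (intro AE_I2 tendsto_eventually)
      fix \<omega>
      obtain N where "X 0 \<omega> \<le> real N" using real_arch_simple by blast
      then show "eventually (\<lambda>i. tr i (X 0 \<omega>) = X 0 \<omega>) sequentially"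
        unfolding eventually_sequentially tr_def by (intro exI[of _ N]) auto
    qed
    show "AE \<omega> in M. norm (tr i (X 0 \<omega>)) \<le> X 0 \<omega>" for i
      by (intro AE_I2) (auto simp: tr_def nn abs_of_nonneg)
  qed auto
  then show ?thesis unfolding m_eq[abs_def] \<mu>_def .
qed

end



context slln begin

definition "c i \<omega> = Y i \<omega> - m i"

lemma c_measurable[measurable]: "c i \<in> borel_measurable M"
  unfolding c_def by measurable

lemma m_bounds: "0 \<le> m i" "m i \<le> real (Suc i)"
proof -
  show "0 \<le> m i" unfolding m_def by (rule Bochner_Integration.integral_nonneg) (simp add: Y_bounds)
  have "m i \<le> expectation (\<lambda>_. real (Suc i))"
    unfolding m_def by (rule Bochner_Integration.integral_mono[OF Y_integrable]) (auto simp: Y_bounds simp del: of_nat_Suc)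
  then show "m i \<le> real (Suc i)" by (simp add: prob_space del: of_nat_Suc)
qed

lemma c_bound: "\<bar>c i \<omega>\<bar> \<le> real (Suc i)"
  using Y_bounds[of i \<omega>] m_bounds[of i] unfolding c_def by (simp del: of_nat_Suc)

lemma c_integrable: "integrable M (c i)"
  by (rule integrable_const_bound[where B="real (Suc i)"]) (auto simp: c_bound simp del: of_nat_Suc)

lemma cc_integrable: "integrable M (\<lambda>\<omega>. c i \<omega> * c j \<omega>)"
proof (rule integrable_const_bound[where B="real (Suc i) * real (Suc j)"])
  show "AE x in M. norm (c i x * c j x) \<le> real (Suc i) * real (Suc j)"
  proof (intro AE_I2)
    fix x
    have "\<bar>c i x\<bar> * \<bar>c j x\<bar> \<le> real (Suc i) * real (Suc j)"
      by (intro mult_mono c_bound) auto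
    then show "norm (c i x * c j x) \<le> real (Suc i) * real (Suc j)" by (simp add: abs_mult del: of_nat_Suc)
  qed
qed auto

lemma c_mean: "expectation (c i) = 0"
  unfolding c_def using Y_integrable[of i] by (simp add: m_def prob_space)

lemma c_cross: assumes "i \<noteq> j" shows "expectation (\<lambda>\<omega>. c i \<omega> * c j \<omega>) = 0"
proof -
  have "indep_var borel ((\<lambda>x. tr i x - m i) \<circ> X i) borel ((\<lambda>x. tr j x - m j) \<circ> X j)"
    by (rule indep_var_compose[OF indep[OF assms]]) auto
  moreover have "(\<lambda>x. tr i x - m i) \<circ> X i = c i" "(\<lambda>x. tr j x - m j) \<circ> X j = c j"
    by (auto simp: c_def Y_def fun_eq_iff)
  ultimately have ind: "indep_var borel (c i) borel (c j)" by simp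
  have "expectation (\<lambda>\<omega>. c i \<omega> * c j \<omega>) = expectation (c i) * expectation (c j)"
    by (rule indep_var_lebesgue_integral[OF ind c_integrable c_integrable])
  then show ?thesis by (simp add: c_mean)
qed

lemma c_diag: "expectation (\<lambda>\<omega>. c i \<omega> * c i \<omega>) \<le> v i"
proof -
  have sqint: "integrable M (\<lambda>x. (Y i x)\<^sup>2)"
  proof (rule integrable_const_bound[where B="real (Suc i) * real (Suc i)"])
    show "AE x in M. norm ((Y i x)\<^sup>2) \<le> real (Suc i) * real (Suc i)"
      using Y_bounds[of i] by (intro AE_I2) (simp add: power2_eq_square mult_mono del: of_nat_Suc)
  qed auto
  have "expectation (\<lambda>\<omega>. c i \<omega> * c i \<omega>) = variance (Y i)"
    by (simp add: c_def m_def power2_eq_square)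
  also have "\<dots> = expectation (\<lambda>x. (Y i x)\<^sup>2) - (expectation (Y i))\<^sup>2"
    by (rule variance_eq[OF Y_integrable sqint])
  also have "\<dots> \<le> expectation (\<lambda>x. (Y i x)\<^sup>2)" by simp
  also have "\<dots> = v i"
    unfolding v_def Y_def by (rule transfer_integral) measurable
  finally show ?thesis .
qed

definition "Sp k \<omega> = (\<Sum>i<k. Y i \<omega>)"

lemma Sp_measurable[measurable]: "Sp k \<in> borel_measurable M"
  unfolding Sp_def by measurable

lemma var_Sp: "expectation (\<lambda>\<omega>. (\<Sum>i<k. c i \<omega>)^2) \<le> (\<Sum>i<k. v i)"
proof -
  have "expectation (\<lambda>\<omega>. (\<Sum>i<k. c i \<omega>)^2) = expectation (\<lambda>\<omega>. \<Sum>i<k. \<Sum>j<k. c i \<omega> * c j \<omega>)"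
    by (simp add: power2_eq_square sum_product)
  also have "\<dots> = (\<Sum>i<k. \<Sum>j<k. expectation (\<lambda>\<omega>. c i \<omega> * c j \<omega>))"
    by (simp add: Bochner_Integration.integral_sum Bochner_Integration.integrable_sum cc_integrable)
  also have "\<dots> = (\<Sum>i<k. expectation (\<lambda>\<omega>. c i \<omega> * c i \<omega>))"
  proof (rule sum.cong[OF refl])
    fix i assume i: "i \<in> {..<k}"
    have "(\<Sum>j<k. expectation (\<lambda>\<omega>. c i \<omega> * c j \<omega>)) =
        expectation (\<lambda>\<omega>. c i \<omega> * c i \<omega>) + (\<Sum>j\<in>{..<k} - {i}. expectation (\<lambda>\<omega>. c i \<omega> * c j \<omega>))"
      using i by (subst sum.remove[of _ i]) auto
    also have "(\<Sum>j\<in>{..<k} - {i}. expectation (\<lambda>\<omega>. c i \<omega> * c j \<omega>)) = 0"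
      by (intro sum.neutral) (auto intro: c_cross)
    finally show "(\<Sum>j<k. expectation (\<lambda>\<omega>. c i \<omega> * c j \<omega>)) = expectation (\<lambda>\<omega>. c i \<omega> * c i \<omega>)"
      by simp
  qed
  also have "\<dots> \<le> (\<Sum>i<k. v i)" by (intro sum_mono c_diag)
  finally show ?thesis .
qed

lemma Sp_mean: "expectation (Sp k) = (\<Sum>i<k. m i)"
  unfolding Sp_def m_def by (rule Bochner_Integration.integral_sum) (rule Y_integrable)

lemma cheb_Sp:
  assumes e: "e > 0"
  shows "prob {\<omega>\<in>space M. e \<le> \<bar>Sp k \<omega> - (\<Sum>i<k. m i)\<bar>} \<le> (\<Sum>i<k. v i) / e^2"
proof -
  have sqint: "integrable M (\<lambda>x. (Sp k x)^2)"
  proof (rule integrable_const_bound[where B="(\<Sum>i<k. real (Suc i))^2"])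
    show "AE x in M. norm ((Sp k x)^2) \<le> (\<Sum>i<k. real (Suc i))^2"
    proof (intro AE_I2)
      fix x
      have "0 \<le> Sp k x" "Sp k x \<le> (\<Sum>i<k. real (Suc i))"
        unfolding Sp_def using Y_bounds by (auto intro: sum_nonneg sum_mono simp del: of_nat_Suc)
      then show "norm ((Sp k x)^2) \<le> (\<Sum>i<k. real (Suc i))^2"
        by (simp add: power_mono del: of_nat_Suc)
    qed
  qed auto
  have "prob {\<omega>\<in>space M. e \<le> \<bar>Sp k \<omega> - expectation (Sp k)\<bar>} \<le> variance (Sp k) / e^2"
    by (rule Chebyshev_inequality[OF _ sqint e]) measurable
  moreover have "variance (Sp k) = expectation (\<lambda>\<omega>. (\<Sum>i<k. c i \<omega>)^2)"
  proof -
    have "\<And>\<omega>. Sp k \<omega> - (\<Sum>i<k. m i) = (\<Sum>i<k. c i \<omega>)"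
      by (simp add: Sp_def c_def sum_subtractf)
    then show ?thesis by (simp only: Sp_mean)
  qed
  ultimately have "prob {\<omega>\<in>space M. e \<le> \<bar>Sp k \<omega> - (\<Sum>i<k. m i)\<bar>} \<le> expectation (\<lambda>\<omega>. (\<Sum>i<k. c i \<omega>)^2) / e^2"
    by (simp only: Sp_mean)
  also have "\<dots> \<le> (\<Sum>i<k. v i) / e^2"
    by (rule divide_right_mono[OF var_Sp]) simp
  finally show ?thesis .
qed

end



lemma kseq_filterlim: assumes a: "\<alpha> > 1" shows "filterlim (kseq \<alpha>) at_top sequentially"
  unfolding filterlim_at_top
proof
  fix Z :: nat
  obtain j0 where j0: "Z < kseq \<alpha> j0" using kseq_unb[OF a] by blast
  show "eventually (\<lambda>j. Z \<le> kseq \<alpha> j) sequentially"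
  proof (rule eventually_sequentiallyI[of j0])
    fix j assume "j0 \<le> j"
    then have "kseq \<alpha> j0 \<le> kseq \<alpha> j" using kseq_mono[OF a] by (simp add: monoD)
    then show "Z \<le> kseq \<alpha> j" using j0 by simp
  qed
qed

lemma kseq_real_filterlim: assumes a: "\<alpha> > 1"
  shows "filterlim (\<lambda>j. real (kseq \<alpha> j)) at_top sequentially"
  by (rule filterlim_compose[OF filterlim_real_sequentially kseq_filterlim[OF a]])

context slln begin

lemma tr0sq_integrable: "integrable M (\<lambda>\<omega>. (tr i (X 0 \<omega>))^2)"
proof (rule integrable_const_bound[where B="real (Suc i) * real (Suc i)"])
  show "AE x in M. norm ((tr i (X 0 x))^2) \<le> real (Suc i) * real (Suc i)"
  proof (intro AE_I2)
    fix x
    have "0 \<le> tr i (X 0 x)" "tr i (X 0 x) \<le> real (Suc i)" using tr_abs nn by auto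
    then show "norm ((tr i (X 0 x))^2) \<le> real (Suc i) * real (Suc i)"
      by (simp add: power2_eq_square mult_mono del: of_nat_Suc)
  qed
qed measurable

lemma v_nonneg: "v i \<ge> 0"
  unfolding v_def by (rule Bochner_Integration.integral_nonneg) simp

lemma b_summable:
  assumes a: "\<alpha> > 1"
  shows "summable (\<lambda>j. (\<Sum>i<kseq \<alpha> j. v i) / (real (kseq \<alpha> j))^2)"
proof (rule summableI_nonneg_bounded)
  show "0 \<le> (\<Sum>i<kseq \<alpha> j. v i) / (real (kseq \<alpha> j))^2" for j
    by (intro divide_nonneg_nonneg sum_nonneg v_nonneg) auto
  fix K
  have "(\<Sum>j<K. (\<Sum>i<kseq \<alpha> j. v i) / (real (kseq \<alpha> j))^2)
      = (\<Sum>j<K. expectation (\<lambda>\<omega>. (\<Sum>i<kseq \<alpha> j. (tr i (X 0 \<omega>))^2) / (real (kseq \<alpha> j))^2))"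
  proof (rule sum.cong[OF refl])
    fix j
    show "(\<Sum>i<kseq \<alpha> j. v i) / (real (kseq \<alpha> j))^2
        = expectation (\<lambda>\<omega>. (\<Sum>i<kseq \<alpha> j. (tr i (X 0 \<omega>))^2) / (real (kseq \<alpha> j))^2)"
      unfolding v_def integral_divide_zero
      by (subst Bochner_Integration.integral_sum) (auto intro: tr0sq_integrable)
  qed
  also have "\<dots> = expectation (\<lambda>\<omega>. \<Sum>j<K. (\<Sum>i<kseq \<alpha> j. (tr i (X 0 \<omega>))^2) / (real (kseq \<alpha> j))^2)"
    by (rule Bochner_Integration.integral_sum[symmetric])
       (intro integrable_divide_zero Bochner_Integration.integrable_sum tr0sq_integrable)
  also have "\<dots> \<le> expectation (\<lambda>\<omega>. (2*\<alpha>/(\<alpha>-1)) * X 0 \<omega>)"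
  proof (rule Bochner_Integration.integral_mono)
    show "integrable M (\<lambda>\<omega>. \<Sum>j<K. (\<Sum>i<kseq \<alpha> j. (tr i (X 0 \<omega>))^2) / (real (kseq \<alpha> j))^2)"
      by (intro integrable_divide_zero Bochner_Integration.integrable_sum tr0sq_integrable)
    show "integrable M (\<lambda>\<omega>. (2*\<alpha>/(\<alpha>-1)) * X 0 \<omega>)"
      using int0 by simp
    show "(\<Sum>j<K. (\<Sum>i<kseq \<alpha> j. (tr i (X 0 \<omega>))^2) / (real (kseq \<alpha> j))^2) \<le> (2*\<alpha>/(\<alpha>-1)) * X 0 \<omega>" for \<omega>
      by (rule var_sum_bound[OF a nn])
  qed
  finally show "(\<Sum>j<K. (\<Sum>i<kseq \<alpha> j. v i) / (real (kseq \<alpha> j))^2) \<le> expectation (\<lambda>\<omega>. (2*\<alpha>/(\<alpha>-1)) * X 0 \<omega>)" .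
qed

lemma subseq_eps:
  assumes a: "\<alpha> > 1" and e: "e > 0"
  shows "AE \<omega> in M. eventually (\<lambda>j. \<bar>Sp (kseq \<alpha> j) \<omega> - (\<Sum>i<kseq \<alpha> j. m i)\<bar> < e * real (kseq \<alpha> j)) sequentially"
proof -
  define A where "A j = {\<omega>\<in>space M. e * real (kseq \<alpha> j) \<le> \<bar>Sp (kseq \<alpha> j) \<omega> - (\<Sum>i<kseq \<alpha> j. m i)\<bar>}" for j
  have [measurable]: "A j \<in> sets M" for j unfolding A_def by measurable
  have pA: "prob (A j) \<le> ((\<Sum>i<kseq \<alpha> j. v i) / (real (kseq \<alpha> j))^2) / e^2" for j
  proof -
    have kp: "real (kseq \<alpha> j) > 0" using kseq_bounds(3)[OF a] by simp
    have "prob (A j) \<le> (\<Sum>i<kseq \<alpha> j. v i) / (e * real (kseq \<alpha> j))^2"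
      unfolding A_def by (rule cheb_Sp) (use e kp in simp)
    also have "\<dots> = ((\<Sum>i<kseq \<alpha> j. v i) / (real (kseq \<alpha> j))^2) / e^2"
      by (simp add: power_mult_distrib field_simps)
    finally show ?thesis .
  qed
  have "summable (\<lambda>j. ((\<Sum>i<kseq \<alpha> j. v i) / (real (kseq \<alpha> j))^2) / e^2)"
    by (rule summable_divide[OF b_summable[OF a]])
  then have "summable (\<lambda>j. prob (A j))"
    by (rule summable_comparison_test'[where N=0]) (use pA in auto)
  then have "AE \<omega> in M. eventually (\<lambda>j. \<omega> \<in> space M - A j) sequentially"
    by (intro borel_cantelli_AE1) (auto simp: less_top[symmetric])
  then show ?thesis
  proof (rule AE_mp, intro AE_I2 impI)
    fix \<omega> assume "\<omega> \<in> space M" and ev: "eventually (\<lambda>j. \<omega> \<in> space M - A j) sequentially"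
    show "eventually (\<lambda>j. \<bar>Sp (kseq \<alpha> j) \<omega> - (\<Sum>i<kseq \<alpha> j. m i)\<bar> < e * real (kseq \<alpha> j)) sequentially"
      using ev by eventually_elim (auto simp: A_def \<open>\<omega> \<in> space M\<close>)
  qed
qed

end



context slln begin

lemma subseq_Sp:
  assumes a: "\<alpha> > 1"
  shows "AE \<omega> in M. (\<lambda>j. Sp (kseq \<alpha> j) \<omega> / real (kseq \<alpha> j)) \<longlonglongrightarrow> \<mu>"
proof -
  have "AE \<omega> in M. \<forall>l::nat. eventually (\<lambda>j. \<bar>Sp (kseq \<alpha> j) \<omega> - (\<Sum>i<kseq \<alpha> j. m i)\<bar> < (1 / real (Suc l)) * real (kseq \<alpha> j)) sequentially"
    unfolding AE_all_countable by (intro allI subseq_eps[OF a]) simp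
  then show ?thesis
  proof (rule AE_mp, intro AE_I2 impI)
    fix \<omega> assume H: "\<forall>l::nat. eventually (\<lambda>j. \<bar>Sp (kseq \<alpha> j) \<omega> - (\<Sum>i<kseq \<alpha> j. m i)\<bar> < (1 / real (Suc l)) * real (kseq \<alpha> j)) sequentially"
    have d: "(\<lambda>j. (Sp (kseq \<alpha> j) \<omega> - (\<Sum>i<kseq \<alpha> j. m i)) / real (kseq \<alpha> j)) \<longlonglongrightarrow> 0"
    proof (rule LIMSEQ_I)
      fix r :: real assume r: "r > 0"
      obtain l where l: "1 / real (Suc l) < r" using r by (metis nat_approx_posE)
      from H[rule_format, of l] obtain N where N: "\<And>j. j \<ge> N \<Longrightarrow> \<bar>Sp (kseq \<alpha> j) \<omega> - (\<Sum>i<kseq \<alpha> j. m i)\<bar> < (1 / real (Suc l)) * real (kseq \<alpha> j)"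
        unfolding eventually_sequentially by auto
      show "\<exists>no. \<forall>j\<ge>no. norm ((Sp (kseq \<alpha> j) \<omega> - (\<Sum>i<kseq \<alpha> j. m i)) / real (kseq \<alpha> j) - 0) < r"
      proof (intro exI allI impI)
        fix j assume "j \<ge> N"
        from N[OF this] have *: "\<bar>Sp (kseq \<alpha> j) \<omega> - (\<Sum>i<kseq \<alpha> j. m i)\<bar> / real (kseq \<alpha> j) < 1 / real (Suc l)"
          using kseq_bounds(3)[OF a, of j] by (simp add: field_simps del: of_nat_Suc)
        show "norm ((Sp (kseq \<alpha> j) \<omega> - (\<Sum>i<kseq \<alpha> j. m i)) / real (kseq \<alpha> j) - 0) < r"
          using * l by (simp add: abs_divide del: of_nat_Suc)
      qed
    qed
    have ces: "(\<lambda>j. (\<Sum>i<kseq \<alpha> j. m i) / real (kseq \<alpha> j)) \<longlonglongrightarrow> \<mu>"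
      using filterlim_compose[OF cesaro_real[OF stepB] kseq_filterlim[OF a]] by simp
    have "(\<lambda>j. (Sp (kseq \<alpha> j) \<omega> - (\<Sum>i<kseq \<alpha> j. m i)) / real (kseq \<alpha> j) + (\<Sum>i<kseq \<alpha> j. m i) / real (kseq \<alpha> j)) \<longlonglongrightarrow> 0 + \<mu>"
      by (rule tendsto_add[OF d ces])
    then show "(\<lambda>j. Sp (kseq \<alpha> j) \<omega> / real (kseq \<alpha> j)) \<longlonglongrightarrow> \<mu>"
      by (simp add: diff_divide_distrib)
  qed
qed

definition "S k \<omega> = (\<Sum>i<k. X i \<omega>)"

lemma subseq_S:
  assumes a: "\<alpha> > 1"
  shows "AE \<omega> in M. (\<lambda>j. S (kseq \<alpha> j) \<omega> / real (kseq \<alpha> j)) \<longlonglongrightarrow> \<mu>"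
  using subseq_Sp[OF a] stepA
proof (eventually_elim)
  case (elim \<omega>)
  from elim(2) obtain N where N: "\<And>n. n \<ge> N \<Longrightarrow> X n \<omega> = Y n \<omega>"
    unfolding eventually_sequentially by auto
  define D where "D = (\<Sum>i<N. X i \<omega> - Y i \<omega>)"
  have SD: "S k \<omega> = Sp k \<omega> + D" if k: "k \<ge> N" for k
  proof -
    have "S k \<omega> - Sp k \<omega> = (\<Sum>i<k. X i \<omega> - Y i \<omega>)"
      by (simp add: S_def Sp_def sum_subtractf)
    also have "{..<k} = {..<N} \<union> {N..<k}" using k by auto
    also have "(\<Sum>i\<in>{..<N} \<union> {N..<k}. X i \<omega> - Y i \<omega>) = D + (\<Sum>i\<in>{N..<k}. X i \<omega> - Y i \<omega>)"
      unfolding D_def by (subst sum.union_disjoint) auto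
    also have "(\<Sum>i\<in>{N..<k}. X i \<omega> - Y i \<omega>) = 0"
      by (intro sum.neutral) (auto simp: N)
    finally show ?thesis by simp
  qed
  have D0: "(\<lambda>j. D / real (kseq \<alpha> j)) \<longlonglongrightarrow> 0"
    by (rule tendsto_divide_0[OF tendsto_const filterlim_at_top_imp_at_infinity[OF kseq_real_filterlim[OF a]]])
  have "(\<lambda>j. Sp (kseq \<alpha> j) \<omega> / real (kseq \<alpha> j) + D / real (kseq \<alpha> j)) \<longlonglongrightarrow> \<mu> + 0"
    by (rule tendsto_add[OF elim(1) D0])
  then have lim: "(\<lambda>j. Sp (kseq \<alpha> j) \<omega> / real (kseq \<alpha> j) + D / real (kseq \<alpha> j)) \<longlonglongrightarrow> \<mu>" by simp
  have ev: "eventually (\<lambda>j. Sp (kseq \<alpha> j) \<omega> / real (kseq \<alpha> j) + D / real (kseq \<alpha> j) = S (kseq \<alpha> j) \<omega> / real (kseq \<alpha> j)) sequentially"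
  proof -
    have "eventually (\<lambda>j. N \<le> kseq \<alpha> j) sequentially"
      using kseq_filterlim[OF a] by (simp add: filterlim_at_top)
    then show ?thesis
      by eventually_elim (simp add: SD add_divide_distrib)
  qed
  show ?case by (rule Lim_transform_eventually[OF lim ev])
qed

lemma S_mono: "mono (\<lambda>k. S k \<omega>)"
  unfolding mono_iff_le_Suc S_def by (simp add: nn)

lemma S_nonneg: "S k \<omega> \<ge> 0"
  unfolding S_def by (simp add: nn sum_nonneg)

theorem slln_main: "AE \<omega> in M. (\<lambda>n. S n \<omega> / real n) \<longlonglongrightarrow> \<mu>"
proof -
  define al where "al l = 1 + 1 / real (Suc l)" for l
  have al1: "al l > 1" for l unfolding al_def by simp
  have "AE \<omega> in M. \<forall>l. (\<lambda>j. S (kseq (al l) j) \<omega> / real (kseq (al l) j)) \<longlonglongrightarrow> \<mu>"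
    unfolding AE_all_countable by (intro allI subseq_S al1)
  then show ?thesis
  proof (rule AE_mp, intro AE_I2 impI)
    fix \<omega> assume H: "\<forall>l. (\<lambda>j. S (kseq (al l) j) \<omega> / real (kseq (al l) j)) \<longlonglongrightarrow> \<mu>"
    define dl where "dl l = 1 / real (Suc l)" for l
    have dl0: "dl l > 0" for l unfolding dl_def by simp
    have dlim: "dl \<longlonglongrightarrow> 0" unfolding dl_def by (rule LIMSEQ_inverse_real_of_nat[unfolded inverse_eq_divide])
    have allim: "al \<longlonglongrightarrow> 1"
    proof -
      have "(\<lambda>l. 1 + dl l) \<longlonglongrightarrow> 1 + 0" by (intro tendsto_intros dlim)
      then show ?thesis by (simp add: al_def[abs_def] dl_def)
    qed
    show "(\<lambda>n. S n \<omega> / real n) \<longlonglongrightarrow> \<mu>"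
    proof (rule limit_from_bounds[where lo="\<lambda>l. (\<mu> - dl l)/(al l + dl l)" and up="\<lambda>l. (\<mu> + dl l)*(al l + dl l)"])
      fix l
      show "eventually (\<lambda>n. (\<mu> - dl l)/(al l + dl l) \<le> S n \<omega> / real n \<and> S n \<omega> / real n \<le> (\<mu> + dl l)*(al l + dl l)) sequentially"
        by (rule sandwich_fixed[OF S_mono S_nonneg kseq_mono[OF al1] kseq_bounds(3)[OF al1] kseq_unb[OF al1] kseq_ratio[OF al1] H[rule_format] dl0])
           (use al1[of l] in simp)
    next
      have "(\<lambda>l. (\<mu> - dl l)/(al l + dl l)) \<longlonglongrightarrow> (\<mu> - 0)/(1 + 0)"
        by (intro tendsto_intros dlim allim) simp
      then show "(\<lambda>l. (\<mu> - dl l)/(al l + dl l)) \<longlonglongrightarrow> \<mu>" by simp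
    next
      have "(\<lambda>l. (\<mu> + dl l)*(al l + dl l)) \<longlonglongrightarrow> (\<mu> + 0)*(1 + 0)"
        by (intro tendsto_intros dlim allim)
      then show "(\<lambda>l. (\<mu> + dl l)*(al l + dl l)) \<longlonglongrightarrow> \<mu>" by simp
    qed
  qed
qed

end



lemma slln_ident_compose:
  assumes [measurable]: "X i \<in> borel_measurable M" "X 0 \<in> borel_measurable M" "f \<in> borel_measurable borel"
    and id: "distr M borel (X i) = distr M borel (X 0)"
  shows "distr M borel (\<lambda>\<omega>. f (X i \<omega>)) = distr M borel (\<lambda>\<omega>. f (X 0 \<omega>))"
proof -
  have "distr M borel (\<lambda>\<omega>. f (X i \<omega>)) = distr (distr M borel (X i)) borel f"
    by (subst distr_distr) (auto simp: comp_def)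
  also have "\<dots> = distr (distr M borel (X 0)) borel f" by (simp only: id)
  also have "\<dots> = distr M borel (\<lambda>\<omega>. f (X 0 \<omega>))"
    by (subst distr_distr) (auto simp: comp_def)
  finally show ?thesis .
qed

lemma slln_nonneg_part:
  fixes X :: "nat \<Rightarrow> 'a \<Rightarrow> real" and f :: "real \<Rightarrow> real"
  assumes P: "prob_space M"
    and rv[measurable]: "\<And>i. X i \<in> borel_measurable M"
    and ident: "\<And>i. distr M borel (X i) = distr M borel (X 0)"
    and indep: "\<And>i j. i \<noteq> j \<Longrightarrow> prob_space.indep_var M borel (X i) borel (X j)"
    and fm[measurable]: "f \<in> borel_measurable borel" and fnn: "\<And>x. f x \<ge> 0"
    and int: "integrable M (\<lambda>\<omega>. f (X 0 \<omega>))"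
  shows "AE \<omega> in M. (\<lambda>n. (\<Sum>i<n. f (X i \<omega>)) / real n) \<longlonglongrightarrow> (\<integral>\<omega>. f (X 0 \<omega>) \<partial>M)"
proof -
  interpret prob_space M by (rule P)
  interpret Q: slln M "\<lambda>i \<omega>. f (X i \<omega>)"
  proof unfold_locales
    show "(\<lambda>\<omega>. f (X i \<omega>)) \<in> borel_measurable M" for i by measurable
    show "0 \<le> f (X i \<omega>)" for i \<omega> by (rule fnn)
    show "distr M borel (\<lambda>\<omega>. f (X i \<omega>)) = distr M borel (\<lambda>\<omega>. f (X 0 \<omega>))" for i
      by (rule slln_ident_compose[where X=X and i=i and f=f]) (simp_all add: ident[of i])
    show "indep_var borel (\<lambda>\<omega>. f (X i \<omega>)) borel (\<lambda>\<omega>. f (X j \<omega>))" if "i \<noteq> j" for i j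
      using indep_var_compose[OF indep[OF that] fm fm] by (simp add: comp_def)
    show "integrable M (\<lambda>\<omega>. f (X 0 \<omega>))" by (rule int)
  qed
  show ?thesis using Q.slln_main unfolding Q.S_def Q.\<mu>_def .
qed

theorem slln_real:
  fixes X :: "nat \<Rightarrow> 'a \<Rightarrow> real"
  assumes P: "prob_space M"
    and rv[measurable]: "\<And>i. X i \<in> borel_measurable M"
    and ident: "\<And>i. distr M borel (X i) = distr M borel (X 0)"
    and indep: "\<And>i j. i \<noteq> j \<Longrightarrow> prob_space.indep_var M borel (X i) borel (X j)"
    and int: "integrable M (X 0)"
  shows "AE \<omega> in M. (\<lambda>n. (\<Sum>i<n. X i \<omega>) / real n) \<longlonglongrightarrow> (\<integral>\<omega>. X 0 \<omega> \<partial>M)"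
proof -
  have ip: "integrable M (\<lambda>\<omega>. max (X 0 \<omega>) 0)" using int by auto
  have in': "integrable M (\<lambda>\<omega>. max (- X 0 \<omega>) 0)" using int by auto
  have A1: "AE \<omega> in M. (\<lambda>n. (\<Sum>i<n. max (X i \<omega>) 0) / real n) \<longlonglongrightarrow> (\<integral>\<omega>. max (X 0 \<omega>) 0 \<partial>M)"
  proof (rule slln_nonneg_part[where X=X and f="\<lambda>x. max x 0"])
    show "(\<lambda>x::real. max x 0) \<in> borel_measurable borel" by (intro borel_measurable_max) auto
  qed (rule P, rule rv, rule ident, erule indep, simp, rule ip)
  have A2: "AE \<omega> in M. (\<lambda>n. (\<Sum>i<n. max (- X i \<omega>) 0) / real n) \<longlonglongrightarrow> (\<integral>\<omega>. max (- X 0 \<omega>) 0 \<partial>M)"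
  proof (rule slln_nonneg_part[where X=X and f="\<lambda>x. max (-x) 0"])
    show "(\<lambda>x::real. max (-x) 0) \<in> borel_measurable borel" by (intro borel_measurable_max borel_measurable_uminus) auto
  qed (rule P, rule rv, rule ident, erule indep, simp, rule in')
  have E: "(\<integral>\<omega>. X 0 \<omega> \<partial>M) = (\<integral>\<omega>. max (X 0 \<omega>) 0 \<partial>M) - (\<integral>\<omega>. max (- X 0 \<omega>) 0 \<partial>M)"
  proof -
    have "(\<integral>\<omega>. max (X 0 \<omega>) 0 \<partial>M) - (\<integral>\<omega>. max (- X 0 \<omega>) 0 \<partial>M)
        = (\<integral>\<omega>. max (X 0 \<omega>) 0 - max (- X 0 \<omega>) 0 \<partial>M)"
      by (rule Bochner_Integration.integral_diff[OF ip in', symmetric])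
    also have "\<dots> = (\<integral>\<omega>. X 0 \<omega> \<partial>M)" by (rule Bochner_Integration.integral_cong) auto
    finally show ?thesis by simp
  qed
  show ?thesis
    using A1 A2
  proof eventually_elim
    case (elim \<omega>)
    have "(\<lambda>n. (\<Sum>i<n. max (X i \<omega>) 0) / real n - (\<Sum>i<n. max (- X i \<omega>) 0) / real n)
        \<longlonglongrightarrow> (\<integral>\<omega>. max (X 0 \<omega>) 0 \<partial>M) - (\<integral>\<omega>. max (- X 0 \<omega>) 0 \<partial>M)"
      by (rule tendsto_diff[OF elim(1) elim(2)])
    moreover have "(\<Sum>i<n. max (X i \<omega>) 0) / real n - (\<Sum>i<n. max (- X i \<omega>) 0) / real n = (\<Sum>i<n. X i \<omega>) / real n" for n
    proof -
      have "(\<Sum>i<n. max (X i \<omega>) 0) - (\<Sum>i<n. max (- X i \<omega>) 0) = (\<Sum>i<n. X i \<omega>)"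
        by (subst sum_subtractf[symmetric]) (rule sum.cong, auto)
      then show ?thesis by (simp add: diff_divide_distrib[symmetric])
    qed
    ultimately show ?case using E by simp
  qed
qed



lemma uniform_Icc_density:
  fixes a b :: real assumes ab: "a < b"
  shows "uniform_measure lborel {a..b} = density lborel (\<lambda>x. ennreal (indicator {a..b} x / (b - a)))"
  unfolding uniform_measure_def
proof (rule density_cong)
  show "AE x in lborel. indicator {a..b} x / emeasure lborel {a..b} = ennreal (indicator {a..b} x / (b - a))"
  proof (intro AE_I2)
    fix x
    have e: "emeasure lborel {a..b} = ennreal (b - a)" using ab by simp
    show "indicator {a..b} x / emeasure lborel {a..b} = ennreal (indicator {a..b} x / (b - a))"
      unfolding e using ab by (auto simp: indicator_def divide_ennreal ennreal_1[symmetric] simp del: ennreal_1)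
  qed
qed auto

lemma uniform_Icc_integral:
  fixes a b :: real and f :: "real \<Rightarrow> real" assumes ab: "a < b" and f[measurable]: "f \<in> borel_measurable borel"
  shows "integral\<^sup>L (uniform_measure lborel {a..b}) f = (LBINT x. indicator {a..b} x / (b - a) * f x)"
  unfolding uniform_Icc_density[OF ab]
  by (subst integral_density) (use ab in auto)

definition hz0 :: "real \<Rightarrow> real" where "hz0 y = indicator {-pi/2..pi/2} y"

lemma hz0_measurable[measurable]: "hz0 \<in> borel_measurable borel"
  unfolding hz0_def by measurable

lemma hz0_alt: "hz0 y = (if \<bar>y\<bar> \<le> pi/2 then 1 else 0)"
  unfolding hz0_def indicator_def by auto

lemma unif_hz0: "integral\<^sup>L (uniform_measure lborel {-pi..pi}) hz0 = 1/2"
proof -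
  have "integral\<^sup>L (uniform_measure lborel {-pi..pi}) hz0 = (LBINT x. indicator {-pi..pi} x / (pi - - pi) * hz0 x)"
    by (rule uniform_Icc_integral) auto
  also have "\<dots> = (LBINT x. indicator {-pi/2..pi/2} x / (2*pi))"
    by (rule Bochner_Integration.integral_cong) (auto simp: hz0_def indicator_def)
  also have "\<dots> = measure lborel {-pi/2..pi/2} / (2*pi)"
    by simp
  also have "\<dots> = 1/2" by simp
  finally show ?thesis .
qed

lemma unif_hz0_sin:
  "integral\<^sup>L (uniform_measure lborel {-pi..pi}) (\<lambda>y. hz0 y * sin (c + y)) = sin c / pi"
proof -
  have "integral\<^sup>L (uniform_measure lborel {-pi..pi}) (\<lambda>y. hz0 y * sin (c + y))
      = (LBINT x. indicator {-pi..pi} x / (pi - - pi) * (hz0 x * sin (c + x)))"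
    by (rule uniform_Icc_integral) auto
  also have "\<dots> = (LBINT x. (sin (c + x) * indicator {-pi/2..pi/2} x) / (2*pi))"
    by (rule Bochner_Integration.integral_cong) (auto simp: hz0_def indicator_def)
  also have "\<dots> = (LBINT x. sin (c + x) * indicator {-pi/2..pi/2} x) / (2*pi)"
    by simp
  also have "(LBINT x. sin (c + x) * indicator {-pi/2..pi/2} x) = (- cos (c + pi/2)) - (- cos (c + - pi/2))"
  proof (rule integral_FTC_Icc_real)
    show "- pi / 2 \<le> pi / 2" by simp
    fix x
    show "((\<lambda>x. - cos (c + x)) has_real_derivative sin (c + x)) (at x)"
      by (auto intro!: derivative_eq_intros)
    show "isCont (\<lambda>x. sin (c + x)) x" by (intro continuous_intros)
  qed
  also have "(- cos (c + pi/2)) - (- cos (c + - pi/2)) = 2 * sin c"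
    by (simp add: cos_add sin_add cos_diff)
  finally show ?thesis by simp
qed



lemma distr_compose_eq:
  assumes X[measurable]: "X \<in> measurable M N" and X'[measurable]: "X' \<in> measurable M N"
    and f[measurable]: "f \<in> measurable N K"
    and eq: "distr M N X = distr M N X'"
  shows "distr M K (\<lambda>\<omega>. f (X \<omega>)) = distr M K (\<lambda>\<omega>. f (X' \<omega>))"
proof -
  have "distr M K (\<lambda>\<omega>. f (X \<omega>)) = distr (distr M N X) K f"
    by (subst distr_distr) (auto simp: comp_def)
  also have "\<dots> = distr (distr M N X') K f" by (simp only: eq)
  also have "\<dots> = distr M K (\<lambda>\<omega>. f (X' \<omega>))"
    by (subst distr_distr) (auto simp: comp_def)
  finally show ?thesis .
qed

context prob_space begin

lemma preimage_family_sub: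
  assumes X: "X \<in> measurable M N" and h: "h \<in> measurable N borel"
    and A: "\<And>\<omega>. \<omega> \<in> space M \<Longrightarrow> A \<omega> = h (X \<omega>)"
  shows "{A -` S \<inter> space M | S. S \<in> sets borel} \<subseteq> {X -` T \<inter> space M | T. T \<in> sets N}"
proof
  fix U assume "U \<in> {A -` S \<inter> space M | S. S \<in> sets borel}"
  then obtain S where S: "S \<in> sets borel" "U = A -` S \<inter> space M" by auto
  have T: "h -` S \<inter> space N \<in> sets N" using h S(1) by (rule measurable_sets)
  have "U = X -` (h -` S \<inter> space N) \<inter> space M"
    using S(2) A measurable_space[OF X] by auto
  with T show "U \<in> {X -` T \<inter> space M | T. T \<in> sets N}" by blast
qed

lemma Int_stable_preimage: "Int_stable {A -` S \<inter> space M | S. S \<in> sets (N::'b measure)}"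
  unfolding Int_stable_def
proof safe
  fix S T assume "S \<in> sets N" "T \<in> sets N"
  then show "\<exists>U. (A -` S \<inter> space M) \<inter> (A -` T \<inter> space M) = A -` U \<inter> space M \<and> U \<in> sets N"
    by (intro exI[of _ "S \<inter> T"]) auto
qed

lemma indep_var_from_sets:
  assumes ind: "indep_sets F I" and ab: "a \<in> I" "b \<in> I" "a \<noteq> b"
    and A[measurable]: "A \<in> borel_measurable M" and B[measurable]: "B \<in> borel_measurable M"
    and FA: "{A -` S \<inter> space M | S. S \<in> sets borel} \<subseteq> F a"
    and FB: "{B -` S \<inter> space M | S. S \<in> sets borel} \<subseteq> F b"
  shows "indep_var borel A borel B"
  unfolding indep_var_eq
proof (intro conjI)
  show "random_variable borel A" "random_variable borel B" by simp_all
  show "indep_set (sigma_sets (space M) {A -` S \<inter> space M | S. S \<in> sets borel})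
                  (sigma_sets (space M) {B -` S \<inter> space M | S. S \<in> sets borel})"
  proof (rule indep_set_sigma_sets[OF _ Int_stable_preimage Int_stable_preimage])
    show "indep_set {A -` S \<inter> space M | S. S \<in> sets borel} {B -` S \<inter> space M | S. S \<in> sets borel}"
    proof (rule indep_setI)
      show "{A -` S \<inter> space M | S. S \<in> sets borel} \<subseteq> events"
        by (auto intro: measurable_sets)
      show "{B -` S \<inter> space M | S. S \<in> sets borel} \<subseteq> events"
        by (auto intro: measurable_sets)
      fix x y assume x: "x \<in> {A -` S \<inter> space M | S. S \<in> sets borel}" and y: "y \<in> {B -` S \<inter> space M | S. S \<in> sets borel}"
      define G where "G j = (if j = a then x else y)" for j
      have "prob (\<Inter>j\<in>{a,b}. G j) = (\<Prod>j\<in>{a,b}. prob (G j))"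
        by (rule indep_setsD[OF ind]) (use ab x y FA FB in \<open>auto simp: G_def\<close>)
      then show "prob (x \<inter> y) = prob x * prob y"
        using ab by (simp add: G_def Int_commute)
    qed
  qed
qed

lemma indep_vars_pair:
  assumes ind: "indep_vars (\<lambda>_. borel) Z I" and ij: "i \<in> I" "j \<in> I" "i \<noteq> j"
  shows "indep_var borel (Z i) borel (Z j)"
proof -
  have "indep_var borel ((\<lambda>f. f i) \<circ> (\<lambda>\<omega>. restrict (\<lambda>i. Z i \<omega>) {i}))
      borel ((\<lambda>f. f j) \<circ> (\<lambda>\<omega>. restrict (\<lambda>i. Z i \<omega>) {j}))"
    using ij by (intro indep_var_compose[OF indep_var_restrict[OF ind]]) auto
  also have "((\<lambda>f. f i) \<circ> (\<lambda>\<omega>. restrict (\<lambda>i. Z i \<omega>) {i})) = Z i" by auto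
  also have "((\<lambda>f. f j) \<circ> (\<lambda>\<omega>. restrict (\<lambda>i. Z i \<omega>) {j})) = Z j" by auto
  finally show ?thesis .
qed

end


theorem lemma3:
  fixes M :: "'a measure"
    and N :: nat and \<theta> :: real
    and w G :: "nat \<Rightarrow> real"
    and F :: "nat \<Rightarrow> real \<Rightarrow> 'a \<Rightarrow> real"
    and \<phi> :: "nat \<Rightarrow> 'a \<Rightarrow> real"
    and n :: "nat \<Rightarrow> real \<Rightarrow> 'a \<Rightarrow> real"
    and g :: "real \<Rightarrow> real"
    and x :: "nat \<Rightarrow> real \<Rightarrow> 'a \<Rightarrow> real"
    and Xp :: "nat \<Rightarrow> 'a \<Rightarrow> nat set"
    and ghat :: "nat \<Rightarrow> real \<Rightarrow> 'a \<Rightarrow> real"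
  assumes P: "prob_space M"
    and N1: "N \<ge> 1"
    and wpos: "\<And>k. k \<in> {1..N} \<Longrightarrow> w k > 0"
    and g_def: "\<And>t. g t = (\<Sum>k=1..N. G k * sin (w k * t + \<theta>))"
    and x_def: "\<And>i t \<omega>. x i t \<omega> =
        (\<Sum>k=1..N. G k * F i (w k) \<omega> * sin (w k * t + \<phi> i \<omega> + \<theta>)) + n i t \<omega>"
    and indep_tuples: "prob_space.indep_vars M (\<lambda>_. tuple_space N)
        (\<lambda>i \<omega>. ((\<lambda>k\<in>{1..N}. F i (w k) \<omega>), \<phi> i \<omega>, (\<lambda>t. n i t \<omega>))) {1..}"
    and ident_distr: "\<And>i. i \<ge> 1 \<Longrightarrow>
        distr M (tuple_space N) (\<lambda>\<omega>. ((\<lambda>k\<in>{1..N}. F i (w k) \<omega>), \<phi> i \<omega>, (\<lambda>t. n i t \<omega>)))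
      = distr M (tuple_space N) (\<lambda>\<omega>. ((\<lambda>k\<in>{1..N}. F 1 (w k) \<omega>), \<phi> 1 \<omega>, (\<lambda>t. n 1 t \<omega>)))"
    and indep_within: "\<And>i. i \<ge> 1 \<Longrightarrow>
        indep3 M (PiM {1..N} (\<lambda>_. borel)) (\<lambda>\<omega>. \<lambda>k\<in>{1..N}. F i (w k) \<omega>)
                 borel (\<phi> i)
                 (PiM UNIV (\<lambda>_. borel)) (\<lambda>\<omega> t. n i t \<omega>)"
    and F_int: "\<And>i k. i \<ge> 1 \<Longrightarrow> k \<in> {1..N} \<Longrightarrow> integrable M (F i (w k))"
    and \<phi>_unif: "\<And>i. i \<ge> 1 \<Longrightarrow> distr M borel (\<phi> i) = uniform_measure lborel {-pi..pi}"
    and n_int: "\<And>i t. i \<ge> 1 \<Longrightarrow> integrable M (n i t)"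
    and n_mean: "\<And>i t. i \<ge> 1 \<Longrightarrow> (\<integral>\<omega>. n i t \<omega> \<partial>M) = 0"
    and Xp_def: "\<And>m \<omega>. Xp m \<omega> = {i \<in> {1..m}. \<bar>\<phi> i \<omega>\<bar> \<le> pi / 2}"
    and ghat_def: "\<And>m t \<omega>. ghat m t \<omega> = (1 / real (card (Xp m \<omega>))) * (\<Sum>i\<in>Xp m \<omega>. x i t \<omega>)"
    and same_mean: "\<exists>C. \<forall>i k. i \<ge> 1 \<longrightarrow> k \<in> {1..N} \<longrightarrow> (\<integral>\<omega>. F i (w k) \<omega> \<partial>M) = C"
  shows "\<exists>c. \<forall>t. AE \<omega> in M. (\<lambda>m. ghat m t \<omega>) \<longlonglongrightarrow> c * g t"
proof -
  interpret prob_space M by (rule P)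
  obtain C where C: "\<And>i k. i \<ge> 1 \<Longrightarrow> k \<in> {1..N} \<Longrightarrow> (\<integral>\<omega>. F i (w k) \<omega> \<partial>M) = C"
    using same_mean by auto
  define T where "T i \<omega> = ((\<lambda>k\<in>{1..N}. F i (w k) \<omega>), \<phi> i \<omega>, (\<lambda>t. n i t \<omega>))" for i \<omega>
  have Tind: "indep_vars (\<lambda>_. tuple_space N) T {1..}"
    using indep_tuples unfolding T_def[abs_def] .
  have Tm: "T i \<in> measurable M (tuple_space N)" if "i \<ge> 1" for i
    using Tind that unfolding indep_vars_def by auto
  have Tid: "distr M (tuple_space N) (T i) = distr M (tuple_space N) (T 1)" if "i \<ge> 1" for i
    using ident_distr[OF that] unfolding T_def[abs_def] .
  have ind3: "indep3 M (PiM {1..N} (\<lambda>_. borel)) (\<lambda>\<omega>. \<lambda>k\<in>{1..N}. F 1 (w k) \<omega>)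
                 borel (\<phi> 1) (PiM UNIV (\<lambda>_. borel)) (\<lambda>\<omega> t. n 1 t \<omega>)"
    by (rule indep_within) simp
  then have X1m[measurable]: "(\<lambda>\<omega>. \<lambda>k\<in>{1..N}. F 1 (w k) \<omega>) \<in> measurable M (PiM {1..N} (\<lambda>_. borel))"
    and \<phi>1m[measurable]: "\<phi> 1 \<in> borel_measurable M"
    and X3m[measurable]: "(\<lambda>\<omega> t. n 1 t \<omega>) \<in> measurable M (PiM UNIV (\<lambda>_. borel))"
    and Isets: "indep_sets (\<lambda>j::nat. if j = 0 then {(\<lambda>\<omega>. \<lambda>k\<in>{1..N}. F 1 (w k) \<omega>) -` A \<inter> space M | A. A \<in> sets (PiM {1..N} (\<lambda>_. borel))}
                 else if j = 1 then {\<phi> 1 -` A \<inter> space M | A. A \<in> sets borel}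
                 else {(\<lambda>\<omega> t. n 1 t \<omega>) -` A \<inter> space M | A. A \<in> sets (PiM UNIV (\<lambda>_. borel))}) {0, 1, 2}"
    unfolding indep3_def by auto
  have Fm[measurable]: "F 1 (w k) \<in> borel_measurable M" if "k \<in> {1..N}" for k
    using F_int[of 1 k] that by auto
  have nm[measurable]: "n 1 t \<in> borel_measurable M" for t
    using n_int[of 1 t] by auto
  have unif: "distr M borel (\<phi> 1) = uniform_measure lborel {-pi..pi}" by (rule \<phi>_unif) simp
  have Eh: "(\<integral>\<omega>. h (\<phi> 1 \<omega>) \<partial>M) = integral\<^sup>L (uniform_measure lborel {-pi..pi}) h"
    if [measurable]: "h \<in> borel_measurable borel" for h :: "real \<Rightarrow> real"
  proof -
    have "(\<integral>\<omega>. h (\<phi> 1 \<omega>) \<partial>M) = integral\<^sup>L (distr M borel (\<phi> 1)) h"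
      by (rule Bochner_Integration.integral_distr[symmetric]) measurable
    then show ?thesis by (simp only: unif)
  qed
  have EZ: "(\<integral>\<omega>. hz0 (\<phi> 1 \<omega>) \<partial>M) = 1/2"
    using Eh[of hz0] unif_hz0 by simp
  have hz0_int: "integrable M (\<lambda>\<omega>. hz0 (\<phi> 1 \<omega>) * f (\<phi> 1 \<omega>))" if [measurable]: "f \<in> borel_measurable borel"
    and fb: "\<And>y. \<bar>f y\<bar> \<le> 1" for f :: "real \<Rightarrow> real"
  proof (rule integrable_const_bound[where B=1])
    show "AE x in M. norm (hz0 (\<phi> 1 x) * f (\<phi> 1 x)) \<le> 1"
      using fb by (intro AE_I2) (auto simp: hz0_def indicator_def)
  qed measurable
  show ?thesis
  proof (intro exI allI)
    fix t
    show "AE \<omega> in M. (\<lambda>m. ghat m t \<omega>) \<longlonglongrightarrow> (2 * C / pi) * g t"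
    proof -
    define hy where "hy p = hz0 (fst (snd p)) * ((\<Sum>k=1..N. G k * fst p k * sin (w k * t + fst (snd p) + \<theta>)) + snd (snd p) t)"
      for p :: "(nat \<Rightarrow> real) \<times> real \<times> (real \<Rightarrow> real)"
    define hz where "hz p = hz0 (fst (snd p))" for p :: "(nat \<Rightarrow> real) \<times> real \<times> (real \<Rightarrow> real)"
    have hym[measurable]: "hy \<in> borel_measurable (tuple_space N)"
      unfolding hy_def tuple_space_def by measurable
    have hzm[measurable]: "hz \<in> borel_measurable (tuple_space N)"
      unfolding hz_def tuple_space_def by measurable
    have hyT: "hy (T i \<omega>) = hz0 (\<phi> i \<omega>) * x i t \<omega>" for i \<omega>
    proof -
      have "(\<Sum>k=1..N. G k * (\<lambda>k\<in>{1..N}. F i (w k) \<omega>) k * sin (w k * t + \<phi> i \<omega> + \<theta>))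
          = (\<Sum>k=1..N. G k * F i (w k) \<omega> * sin (w k * t + \<phi> i \<omega> + \<theta>))"
        by (rule sum.cong) auto
      then show ?thesis unfolding hy_def T_def x_def by simp
    qed
    have hzT: "hz (T i \<omega>) = hz0 (\<phi> i \<omega>)" for i \<omega> by (simp add: hz_def T_def)
    have sl: "AE \<omega> in M. (\<lambda>m. (\<Sum>j<m. h (T (Suc j) \<omega>)) / real m) \<longlonglongrightarrow> (\<integral>\<omega>. h (T 1 \<omega>) \<partial>M)"
      if hm[measurable]: "h \<in> borel_measurable (tuple_space N)" and hint: "integrable M (\<lambda>\<omega>. h (T 1 \<omega>))" for h
    proof -
      have "AE \<omega> in M. (\<lambda>m. (\<Sum>j<m. h (T (Suc j) \<omega>)) / real m) \<longlonglongrightarrow> (\<integral>\<omega>. h (T (Suc 0) \<omega>) \<partial>M)"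
      proof (rule slln_real[where X="\<lambda>j \<omega>. h (T (Suc j) \<omega>)"])
        show "prob_space M" by (rule P)
        show "(\<lambda>\<omega>. h (T (Suc j) \<omega>)) \<in> borel_measurable M" for j
          by (rule measurable_compose[OF Tm hm]) simp
        show "distr M borel (\<lambda>\<omega>. h (T (Suc j) \<omega>)) = distr M borel (\<lambda>\<omega>. h (T (Suc 0) \<omega>))" for j
          by (rule distr_compose_eq[OF Tm Tm hm]) (use Tid[of "Suc j"] in simp_all)
        have indh: "indep_vars (\<lambda>_. borel) (\<lambda>i \<omega>. h (T i \<omega>)) {1..}"
          by (rule indep_vars_compose2[OF Tind]) simp
        show "prob_space.indep_var M borel (\<lambda>\<omega>. h (T (Suc i) \<omega>)) borel (\<lambda>\<omega>. h (T (Suc j) \<omega>))"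
          if "i \<noteq> j" for i j
          using indep_vars_pair[OF indh, of "Suc i" "Suc j"] that by simp
        show "integrable M (\<lambda>\<omega>. h (T (Suc 0) \<omega>))" using hint by simp
      qed
      then show ?thesis by simp
    qed
    define s where "s k y = hz0 y * sin ((w k * t + \<theta>) + y)" for k y
    have sm[measurable]: "s k \<in> borel_measurable borel" for k unfolding s_def by measurable
    have sint: "integrable M (\<lambda>\<omega>. s k (\<phi> 1 \<omega>))" for k
      unfolding s_def by (rule hz0_int) auto
    have hz0int: "integrable M (\<lambda>\<omega>. hz0 (\<phi> 1 \<omega>))"
      using hz0_int[of "\<lambda>_. 1"] by simp
    have indF: "indep_var borel (F 1 (w k)) borel (\<lambda>\<omega>. s k (\<phi> 1 \<omega>))" if k: "k \<in> {1..N}" for k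
    proof -
      have FA: "{F 1 (w k) -` S \<inter> space M |S. S \<in> sets borel} \<subseteq> {(\<lambda>\<omega>. \<lambda>k\<in>{1..N}. F 1 (w k) \<omega>) -` A \<inter> space M | A. A \<in> sets (PiM {1..N} (\<lambda>_. borel))}"
        by (rule preimage_family_sub[OF X1m measurable_component_singleton[OF k]]) (use k in simp)
      have FB: "{(\<lambda>\<omega>. s k (\<phi> 1 \<omega>)) -` S \<inter> space M |S. S \<in> sets borel} \<subseteq> {\<phi> 1 -` A \<inter> space M | A. A \<in> sets borel}"
        by (rule preimage_family_sub[OF \<phi>1m sm]) simp
      show ?thesis
        by (rule indep_var_from_sets[OF Isets, of 0 1]) (use FA FB Fm[OF k] measurable_compose[OF \<phi>1m sm] in auto)
    qed
    have EF: "(\<integral>\<omega>. F 1 (w k) \<omega> * s k (\<phi> 1 \<omega>) \<partial>M) = C * (sin (w k * t + \<theta>) / pi)"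
      and intF: "integrable M (\<lambda>\<omega>. F 1 (w k) \<omega> * s k (\<phi> 1 \<omega>))" if k: "k \<in> {1..N}" for k
    proof -
      have Fi: "integrable M (F 1 (w k))" using F_int[of 1 k] k by simp
      show "integrable M (\<lambda>\<omega>. F 1 (w k) \<omega> * s k (\<phi> 1 \<omega>))"
        by (rule indep_var_integrable[OF indF[OF k] Fi sint])
      have "(\<integral>\<omega>. F 1 (w k) \<omega> * s k (\<phi> 1 \<omega>) \<partial>M) = (\<integral>\<omega>. F 1 (w k) \<omega> \<partial>M) * (\<integral>\<omega>. s k (\<phi> 1 \<omega>) \<partial>M)"
        by (rule indep_var_lebesgue_integral[OF indF[OF k] Fi sint])
      also have "(\<integral>\<omega>. F 1 (w k) \<omega> \<partial>M) = C" using C[of 1 k] k by simp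
      also have "(\<integral>\<omega>. s k (\<phi> 1 \<omega>) \<partial>M) = sin (w k * t + \<theta>) / pi"
        using Eh[OF sm[of k]] unif_hz0_sin[of "w k * t + \<theta>"] unfolding s_def by simp
      finally show "(\<integral>\<omega>. F 1 (w k) \<omega> * s k (\<phi> 1 \<omega>) \<partial>M) = C * (sin (w k * t + \<theta>) / pi)" .
    qed
    have indq: "indep_var borel (\<lambda>\<omega>. hz0 (\<phi> 1 \<omega>)) borel (n 1 t)"
    proof -
      have FA: "{(\<lambda>\<omega>. hz0 (\<phi> 1 \<omega>)) -` S \<inter> space M |S. S \<in> sets borel} \<subseteq> {\<phi> 1 -` A \<inter> space M | A. A \<in> sets borel}"
        by (rule preimage_family_sub[OF \<phi>1m hz0_measurable]) simp
      have FB: "{n 1 t -` S \<inter> space M |S. S \<in> sets borel} \<subseteq> {(\<lambda>\<omega> t. n 1 t \<omega>) -` A \<inter> space M | A. A \<in> sets (PiM UNIV (\<lambda>_. borel))}"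
        by (rule preimage_family_sub[OF X3m measurable_component_singleton[of t UNIV]]) simp_all
      show ?thesis
        by (rule indep_var_from_sets[OF Isets, of 1 2]) (use FA FB nm[of t] measurable_compose[OF \<phi>1m hz0_measurable] in auto)
    qed
    have nint: "integrable M (n 1 t)" by (rule n_int) simp
    have Eq: "(\<integral>\<omega>. hz0 (\<phi> 1 \<omega>) * n 1 t \<omega> \<partial>M) = 0"
      using indep_var_lebesgue_integral[OF indq hz0int nint] n_mean[of 1 t] by simp
    have qint: "integrable M (\<lambda>\<omega>. hz0 (\<phi> 1 \<omega>) * n 1 t \<omega>)"
      by (rule indep_var_integrable[OF indq hz0int nint])
    have dec: "hy (T 1 \<omega>) = (\<Sum>k=1..N. G k * (F 1 (w k) \<omega> * s k (\<phi> 1 \<omega>))) + hz0 (\<phi> 1 \<omega>) * n 1 t \<omega>" for \<omega>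
    proof -
      have "hz0 (\<phi> 1 \<omega>) * (\<Sum>k=1..N. G k * F 1 (w k) \<omega> * sin (w k * t + \<phi> 1 \<omega> + \<theta>))
          = (\<Sum>k=1..N. G k * (F 1 (w k) \<omega> * s k (\<phi> 1 \<omega>)))"
        unfolding sum_distrib_left s_def by (rule sum.cong) (simp_all add: ac_simps)
      then show ?thesis unfolding hyT x_def by (simp add: distrib_left)
    qed
    have hint: "integrable M (\<lambda>\<omega>. hy (T 1 \<omega>))"
      unfolding dec
      by (intro Bochner_Integration.integrable_add Bochner_Integration.integrable_sum
          Bochner_Integration.integrable_mult_right intF qint) simp
    have EY: "(\<integral>\<omega>. hy (T 1 \<omega>) \<partial>M) = (C / pi) * g t"
    proof -
      have i1: "integrable M (\<lambda>\<omega>. \<Sum>k=1..N. G k * (F 1 (w k) \<omega> * s k (\<phi> 1 \<omega>)))"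
        by (intro Bochner_Integration.integrable_sum Bochner_Integration.integrable_mult_right intF) simp
      have "(\<integral>\<omega>. hy (T 1 \<omega>) \<partial>M) = (\<integral>\<omega>. (\<Sum>k=1..N. G k * (F 1 (w k) \<omega> * s k (\<phi> 1 \<omega>))) + hz0 (\<phi> 1 \<omega>) * n 1 t \<omega> \<partial>M)"
        by (simp only: dec)
      also have "\<dots> = (\<integral>\<omega>. (\<Sum>k=1..N. G k * (F 1 (w k) \<omega> * s k (\<phi> 1 \<omega>))) \<partial>M) + (\<integral>\<omega>. hz0 (\<phi> 1 \<omega>) * n 1 t \<omega> \<partial>M)"
        by (rule Bochner_Integration.integral_add[OF i1 qint])
      also have "(\<integral>\<omega>. (\<Sum>k=1..N. G k * (F 1 (w k) \<omega> * s k (\<phi> 1 \<omega>))) \<partial>M) = (\<Sum>k=1..N. (\<integral>\<omega>. G k * (F 1 (w k) \<omega> * s k (\<phi> 1 \<omega>)) \<partial>M))"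
        by (rule Bochner_Integration.integral_sum) (intro Bochner_Integration.integrable_mult_right intF, simp)
      also have "\<dots> = (\<Sum>k=1..N. (C / pi) * (G k * sin (w k * t + \<theta>)))"
      proof (rule sum.cong[OF refl])
        fix k assume k: "k \<in> {1..N}"
        have "(\<integral>\<omega>. G k * (F 1 (w k) \<omega> * s k (\<phi> 1 \<omega>)) \<partial>M) = G k * (\<integral>\<omega>. F 1 (w k) \<omega> * s k (\<phi> 1 \<omega>) \<partial>M)"
          by (rule integral_mult_right_zero)
        also have "\<dots> = G k * (C * (sin (w k * t + \<theta>) / pi))" by (simp only: EF[OF k])
        also have "\<dots> = (C / pi) * (G k * sin (w k * t + \<theta>))" by simp
        finally show "(\<integral>\<omega>. G k * (F 1 (w k) \<omega> * s k (\<phi> 1 \<omega>)) \<partial>M) = (C / pi) * (G k * sin (w k * t + \<theta>))" .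
      qed
      also have "\<dots> = (C / pi) * g t" unfolding g_def by (simp only: sum_distrib_left)
      finally show ?thesis by (simp only: Eq add_0_right)
    qed
    have zint: "integrable M (\<lambda>\<omega>. hz (T 1 \<omega>))" unfolding hzT by (rule hz0int)
    have EZ': "(\<integral>\<omega>. hz (T 1 \<omega>) \<partial>M) = 1/2" unfolding hzT by (rule EZ)
    have AY: "AE \<omega> in M. (\<lambda>m. (\<Sum>j<m. hy (T (Suc j) \<omega>)) / real m) \<longlonglongrightarrow> (C / pi) * g t"
      using sl[OF hym hint] unfolding EY .
    have AZ: "AE \<omega> in M. (\<lambda>m. (\<Sum>j<m. hz (T (Suc j) \<omega>)) / real m) \<longlonglongrightarrow> 1/2"
      using sl[OF hzm zint] unfolding EZ' .
    show ?thesis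
      using AY AZ
    proof eventually_elim
      case (elim \<omega>)
      define A where "A m = (\<Sum>j<m. hy (T (Suc j) \<omega>))" for m
      define B where "B m = (\<Sum>j<m. hz (T (Suc j) \<omega>))" for m
      have lim: "(\<lambda>m. (A m / real m) / (B m / real m)) \<longlonglongrightarrow> ((C / pi) * g t) / (1/2)"
        by (rule tendsto_divide) (use elim in \<open>simp_all add: A_def B_def\<close>)
      have sumA: "(\<Sum>i\<in>Xp m \<omega>. x i t \<omega>) = A m" for m
      proof -
        have "(\<Sum>i\<in>Xp m \<omega>. x i t \<omega>) = (\<Sum>i\<in>{1..m}. if \<bar>\<phi> i \<omega>\<bar> \<le> pi / 2 then x i t \<omega> else 0)"
          unfolding Xp_def by (rule sum.inter_filter) simp
        also have "\<dots> = (\<Sum>i\<in>{1..m}. hy (T i \<omega>))"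
          by (rule sum.cong[OF refl]) (simp add: hyT hz0_alt)
        also have "\<dots> = A m" unfolding A_def by (simp add: sum.atLeast1_atMost_eq)
        finally show ?thesis .
      qed
      have cardB: "real (card (Xp m \<omega>)) = B m" for m
      proof -
        have "real (card (Xp m \<omega>)) = (\<Sum>i\<in>Xp m \<omega>. 1)" by simp
        also have "\<dots> = (\<Sum>i\<in>{1..m}. if \<bar>\<phi> i \<omega>\<bar> \<le> pi / 2 then 1 else 0)"
          unfolding Xp_def by (rule sum.inter_filter) simp
        also have "\<dots> = (\<Sum>i\<in>{1..m}. hz (T i \<omega>))"
          by (rule sum.cong[OF refl]) (simp add: hzT hz0_alt)
        also have "\<dots> = B m" unfolding B_def by (simp add: sum.atLeast1_atMost_eq)
        finally show ?thesis .
      qed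
      have ev: "eventually (\<lambda>m. (A m / real m) / (B m / real m) = ghat m t \<omega>) sequentially"
      proof (rule eventually_sequentiallyI[of 1])
        fix m :: nat assume "1 \<le> m"
        then have m0: "real m \<noteq> 0" by simp
        have "(A m / real m) / (B m / real m) = A m / B m"
          using m0 by (cases "B m = 0") (simp_all add: field_simps)
        also have "\<dots> = ghat m t \<omega>" unfolding ghat_def sumA cardB by simp
        finally show "(A m / real m) / (B m / real m) = ghat m t \<omega>" .
      qed
      have "(\<lambda>m. ghat m t \<omega>) \<longlonglongrightarrow> ((C / pi) * g t) / (1/2)"
        by (rule Lim_transform_eventually[OF lim ev])
      moreover have "((C / pi) * g t) / (1/2) = (2 * C / pi) * g t" by simp
      ultimately show ?case by (simp only:)
    qed
    qed
  qed
qed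

end
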